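(* Let $\boldsymbol x\in\mathbb R^n\setminus\{\boldsymbol 0\}$, $\rho\in[0,1)$, $\boldsymbol g\in\mathcal G_\rho$, $\boldsymbol y_l=\mathrm{diag}(\boldsymbol g)\boldsymbol A_l\boldsymbol x$ for $l\in[p]$, and $\boldsymbol\xi_0=\frac1{mp}\sum_{l=1}^p\boldsymbol A_l^\top\boldsymbol y_l$, $\boldsymbol\gamma_0=\boldsymbol 1_m$. Given $\delta\in(0,1)$ and $t\ge1$, provided $mp\gtrsim\delta^{-2}(n+m)\log\frac n\delta$ and $n\gtrsim t\log(mp)$, with probability exceeding $1-Ce^{-c\delta^2mp}-(mp)^{-t}$ for some $C,c>0$ we have $\|\boldsymbol\xi_0-\boldsymbol x\|\le\delta\|\boldsymbol x\|$. Since also $\|\boldsymbol\gamma_0-\boldsymbol g\|_\infty\le\rho$, on this event $(\boldsymbol\xi_0,\boldsymbol\gamma_0)\in\mathcal D_{\kappa_0,\rho}$ with $\kappa_0=\sqrt{\delta^2+\rho^2}$.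
   Context: Random model: $X$ is a centred real random variable with $\mathbb EX^2=1$ and sub-Gaussian norm $\alpha=\|X\|_{\psi_2}:=\sup_{r\ge1}r^{-1/2}(\mathbb E|X|^r)^{1/r}<\infty$; $\boldsymbol a\in\mathbb R^n$ has i.i.d. entries distributed as $X$; $\boldsymbol a_{i,l}$ ($i\in[m]$, $l\in[p]$) are i.i.d. copies of $\boldsymbol a$ and $\boldsymbol A_l\in\mathbb R^{m\times n}$ has rows $\boldsymbol a_{1,l}^\top,\dots,\boldsymbol a_{m,l}^\top$. Standing (Bernoulli restriction) hypothesis: if $\mathbb EX^4=1$, then $n>1$ and $\|\boldsymbol x/\|\boldsymbol x\|\|_4^4\le1-c_0/n$ for a fixed constant $c_0>0$. Notation: $A\gtrsim B$ means $A\ge C'B$ for a sufficiently large constant $C'>0$ depending only on $\alpha$ (and $c_0$); $C,c$ denote such constants. $\boldsymbol 1_m^\perp=\{\boldsymbol v:\boldsymbol 1_m^\top\boldsymbol v=0\}$; $\mathcal G_\rho=\{\boldsymbol 1_m+\boldsymbol e:\boldsymbol e\in\boldsymbol 1_m^\perp,\|\boldsymbol e\|_\infty\le\rho\}$; $\Delta(\boldsymbol\xi,\boldsymbol\gamma)=\|\boldsymbol\xi-\boldsymbol x\|^2+\frac{\|\boldsymbol x\|^2}m\|\boldsymbol\gamma-\boldsymbol g\|^2$; $\mathcal D_{\kappa,\rho}=\{(\boldsymbol\xi,\boldsymbol\gamma)\in\mathbb R^n\times\mathcal G_\rho:\Delta(\boldsymbol\xi,\boldsymbol\gamma)\le\kappa^2\|\boldsymbol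 x\|^2\}$. *)

theory Defs
  imports "HOL-Probability.Probability"
begin

text \<open>Vectors in R^k are represented as functions nat => real, only indices below k matter.\<close>

definition enorm :: "nat \<Rightarrow> (nat \<Rightarrow> real) \<Rightarrow> real" where
  "enorm k v = sqrt (\<Sum>j<k. (v j)\<^sup>2)"

definition infnorm :: "nat \<Rightarrow> (nat \<Rightarrow> real) \<Rightarrow> real" where
  "infnorm k v = Max ({0} \<union> (\<lambda>i. \<bar>v i\<bar>) ` {..<k})"

definition norm4_pow4 :: "nat \<Rightarrow> (nat \<Rightarrow> real) \<Rightarrow> real" where
  "norm4_pow4 k v = (\<Sum>j<k. (v j) ^ 4)"

definition subgauss_norm_eq :: "real measure \<Rightarrow> real \<Rightarrow> bool" where
  "subgauss_norm_eq D \<alpha> \<longleftrightarrow>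
     (\<forall>r\<ge>1. integrable D (\<lambda>u. \<bar>u\<bar> powr r)) \<and>
     bdd_above ((\<lambda>r. r powr (-1/2) * (\<integral>u. \<bar>u\<bar> powr r \<partial>D) powr (1/r)) ` {1..}) \<and>
     (SUP r\<in>{1..}. r powr (-1/2) * (\<integral>u. \<bar>u\<bar> powr r \<partial>D) powr (1/r)) = \<alpha>"

definition Gset :: "nat \<Rightarrow> real \<Rightarrow> (nat \<Rightarrow> real) set" where
  "Gset m \<rho> = {\<gamma>. (\<Sum>i<m. \<gamma> i - 1) = 0 \<and> (\<forall>i<m. \<bar>\<gamma> i - 1\<bar> \<le> \<rho>)}"

definition Delta :: "nat \<Rightarrow> nat \<Rightarrow> (nat \<Rightarrow> real) \<Rightarrow> (nat \<Rightarrow> real)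
      \<Rightarrow> (nat \<Rightarrow> real) \<Rightarrow> (nat \<Rightarrow> real) \<Rightarrow> real" where
  "Delta n m x g \<xi> \<gamma> = (enorm n (\<lambda>j. \<xi> j - x j))\<^sup>2
      + (enorm n x)\<^sup>2 / real m * (enorm m (\<lambda>i. \<gamma> i - g i))\<^sup>2"

definition Dset :: "nat \<Rightarrow> nat \<Rightarrow> (nat \<Rightarrow> real) \<Rightarrow> (nat \<Rightarrow> real) \<Rightarrow> real \<Rightarrow> real
      \<Rightarrow> ((nat \<Rightarrow> real) \<times> (nat \<Rightarrow> real)) set" where
  "Dset n m x g \<kappa> \<rho> = {(\<xi>, \<gamma>). \<gamma> \<in> Gset m \<rho> \<and> Delta n m x g \<xi> \<gamma> \<le> \<kappa>\<^sup>2 * (enorm n x)\<^sup>2}"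

text \<open>Sample space: omega (i,l,j) is the (i,j) entry of A_l, i<m, l<p, j<n, i.i.d. with law D.\<close>
definition sample_space :: "nat \<Rightarrow> nat \<Rightarrow> nat \<Rightarrow> real measure \<Rightarrow> (nat \<times> nat \<times> nat \<Rightarrow> real) measure" where
  "sample_space m p n D = PiM ({..<m} \<times> {..<p} \<times> {..<n}) (\<lambda>_. D)"

definition Amul :: "nat \<Rightarrow> (nat \<times> nat \<times> nat \<Rightarrow> real) \<Rightarrow> nat \<Rightarrow> (nat \<Rightarrow> real) \<Rightarrow> nat \<Rightarrow> real" where
  "Amul n \<omega> l x i = (\<Sum>j<n. \<omega> (i, l, j) * x j)"

definition meas_y :: "nat \<Rightarrow> (nat \<times> nat \<times> nat \<Rightarrow> real) \<Rightarrow> (nat \<Rightarrow> real) \<Rightarrow> (nat \<Rightarrow> real) \<Rightarrow> nat \<Rightarrow> nat \<Rightarrow> real" where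
  "meas_y n \<omega> g x l i = g i * Amul n \<omega> l x i"

definition xi0 :: "nat \<Rightarrow> nat \<Rightarrow> nat \<Rightarrow> (nat \<times> nat \<times> nat \<Rightarrow> real) \<Rightarrow> (nat \<Rightarrow> real) \<Rightarrow> (nat \<Rightarrow> real) \<Rightarrow> nat \<Rightarrow> real" where
  "xi0 m p n \<omega> g x j = (1 / (real m * real p)) * (\<Sum>l<p. \<Sum>i<m. \<omega> (i, l, j) * meas_y n \<omega> g x l i)"

end

theory Submission
  imports Defs
begin

lemma series_integral_bound:
  fixes M :: "'a measure" and h :: "nat \<Rightarrow> 'a \<Rightarrow> real" and b :: "nat \<Rightarrow> real" and f :: "'a \<Rightarrow> real"
  assumes sums: "\<And>x. x \<in> space M \<Longrightarrow> (\<lambda>r. h r x) sums f x"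
    and int: "\<And>r. integrable M (h r)" and nn: "\<And>r x. x \<in> space M \<Longrightarrow> 0 \<le> h r x"
    and bnd: "\<And>r. (\<integral>x. h r x \<partial>M) \<le> b r" and sb: "summable b"
    and fm: "f \<in> borel_measurable M"
  shows "integrable M f \<and> (\<integral>x. f x \<partial>M) \<le> suminf b"
proof -
  have hm: "\<And>r. h r \<in> borel_measurable M" using int by auto
  have b0: "\<And>r. 0 \<le> b r" using bnd nn order_trans integral_nonneg_AE
    by (metis (no_types, lifting) AE_I2)
  have fnn: "0 \<le> f x" if "x \<in> space M" for x
    using sums_le[OF _ sums_zero sums[OF that]] nn[OF that] by blast
  have "(\<integral>\<^sup>+ x. ennreal (f x) \<partial>M) = (\<integral>\<^sup>+ x. (\<Sum>r. ennreal (h r x)) \<partial>M)"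
    by (rule nn_integral_cong) (rule suminf_ennreal_eq[symmetric, OF nn sums], assumption+)
  also have "\<dots> = (\<Sum>r. \<integral>\<^sup>+ x. ennreal (h r x) \<partial>M)"
    by (rule nn_integral_suminf) (use hm in measurable)
  also have "\<dots> = (\<Sum>r. ennreal (\<integral>x. h r x \<partial>M))"
    by (rule suminf_cong) (rule nn_integral_eq_integral[OF int], simp add: nn)
  also have "\<dots> \<le> (\<Sum>r. ennreal (b r))"
    by (intro suminf_le summableI ennreal_leI bnd)
  also have "\<dots> = ennreal (suminf b)"
    by (rule suminf_ennreal2[OF b0 sb])
  finally have le: "(\<integral>\<^sup>+ x. ennreal (f x) \<partial>M) \<le> ennreal (suminf b)" .
  have I: "integrable M f"
    by (rule integrableI_nonneg[OF fm AE_I2[OF fnn] le_less_trans[OF le]]) simp_all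
  have "ennreal (\<integral>x. f x \<partial>M) \<le> ennreal (suminf b)"
    using le nn_integral_eq_integral[OF I] fnn by simp
  then have "(\<integral>x. f x \<partial>M) \<le> suminf b"
    using suminf_nonneg[OF sb b0] by (subst (asm) ennreal_le_iff) auto
  with I show ?thesis by simp
qed

lemma fact_lower: "(real r / exp 1) ^ r \<le> fact r"
proof (induction r)
  case 0 then show ?case by simp
next
  case (Suc r)
  show ?case
  proof (cases "r = 0")
    case True then show ?thesis using exp_ge_add_one_self[of 1] by (simp add: field_simps)
  next
    case False
    have "(1 + 1 / real r) ^ r \<le> exp (1 / real r) ^ r"
      by (intro power_mono) (auto simp: add.commute)
    also have "\<dots> = exp (real r * (1 / real r))" by (simp only: exp_of_nat_mult)
    also have "\<dots> = exp 1" using False by simp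
    finally have e: "(1 + 1 / real r) ^ r \<le> exp 1" .
    have q: "real (Suc r) / exp 1 = (1 + 1/real r) * (real r / exp 1)" using False by (simp add: field_simps)
    have "(real (Suc r) / exp 1) ^ Suc r = (real (Suc r) / exp 1) * (real (Suc r) / exp 1) ^ r"
      by (rule power_Suc)
    also have "(real (Suc r) / exp 1) ^ r = (1 + 1 / real r) ^ r * (real r / exp 1) ^ r"
      unfolding q by (rule power_mult_distrib)
    also have "(real (Suc r) / exp 1) * ((1 + 1 / real r) ^ r * (real r / exp 1) ^ r) \<le> (real (Suc r) / exp 1) * (exp 1 * fact r)"
      by (intro mult_left_mono mult_mono e Suc.IH) auto
    also have "\<dots> = fact (Suc r)" by simp
    finally show ?thesis .
  qed
qed
lemma w_le_exp: "(w::real) \<le> exp (w\<^sup>2 / 4)"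
proof -
  have "w \<le> 1 + w\<^sup>2 / 4" using sum_power2_ge_zero[of "w/2 - 1" 0] by (simp add: power2_eq_square field_simps)
  also have "\<dots> \<le> exp (w\<^sup>2/4)" by (rule exp_ge_add_one_self) 
  finally show ?thesis by (simp add: add.commute)
qed

lemma num_N1:
  assumes y: "0 \<le> (y::real)"
  shows "y ^ r * sqrt (real r) ^ r / fact r \<le> exp ((exp 1 * y)\<^sup>2) * (1/2) ^ r"
proof (cases "r = 0")
  case True then show ?thesis by simp
next
  case False
  let ?s = "sqrt (real r)"
  have s0: "?s > 0" using False by simp
  have ss: "?s * ?s = real r" by simp
  have "y ^ r * ?s ^ r / fact r \<le> y ^ r * ?s ^ r / (real r / exp 1) ^ r"
    using False by (intro divide_left_mono fact_lower mult_nonneg_nonneg) (auto simp: y)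
  also have "\<dots> = (y * ?s / (real r / exp 1)) ^ r"
    by (simp only: power_mult_distrib power_divide)
  also have "y * ?s / (real r / exp 1) = exp 1 * y / ?s"
    using s0 ss by (simp add: field_simps)
  finally have 1: "y ^ r * ?s ^ r / fact r \<le> (exp 1 * y / ?s) ^ r" .
  define w where "w = 2 * exp 1 * y / ?s"
  have w0: "0 \<le> w" using y s0 by (simp add: w_def)
  have "(exp 1 * y / ?s) ^ r = w ^ r * (1/2) ^ r"
    by (simp add: w_def power_mult_distrib[symmetric])
  also have "w ^ r \<le> exp (w\<^sup>2/4) ^ r" by (intro power_mono w_le_exp w0)
  also have "exp (w\<^sup>2/4) ^ r = exp ((exp 1 * y)\<^sup>2)"
  proof -
    have sq: "?s\<^sup>2 = real r" by simp
    have "w\<^sup>2 / 4 = (exp 1 * y)\<^sup>2 / ?s\<^sup>2" unfolding w_def by (simp add: power_divide power_mult_distrib)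
    then have "real r * (w\<^sup>2 / 4) = (exp 1 * y)\<^sup>2" using False by (simp add: sq)
    then show ?thesis by (simp add: exp_of_nat_mult[symmetric])
  qed
  finally show ?thesis using 1 by (simp add: mult_right_mono)
qed

lemma pow_fact_le_exp: assumes "0 \<le> (x::real)" shows "x ^ n / fact n \<le> exp x"
proof -
  have s: "summable (\<lambda>m. x ^ m / fact m)" using exp_converges[of x] by (simp add: sums_iff divide_inverse mult.commute)
  have "(\<Sum>m\<in>{n}. x ^ m / fact m) \<le> (\<Sum>m. x ^ m / fact m)"
    by (rule sum_le_suminf[OF s]) (use assms in auto)
  also have "\<dots> = exp x" using exp_converges[of x] by (simp add: sums_iff divide_inverse mult.commute)
  finally show ?thesis by simp
qed

lemma fact_double: "(fact (2*q) :: real) \<le> 4 ^ q * (fact q)\<^sup>2"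
proof -
  have "fact q * fact (2*q - q) * ((2*q) choose q) = (fact (2*q) :: nat)"
    by (rule binomial_fact_lemma) simp
  then have e: "fact (2*q) = (fact q)\<^sup>2 * ((2*q) choose q)" by (simp add: power2_eq_square mult_ac)
  have "(2*q) choose q \<le> 2 ^ (2*q)" by (rule binomial_le_pow2)
  also have "(2::nat) ^ (2*q) = 4 ^ q" by (simp add: power_mult)
  finally have "(fact (2*q) :: nat) \<le> (fact q)\<^sup>2 * 4 ^ q" unfolding e by (intro mult_left_mono) auto
  then have "real (fact (2*q)) \<le> real ((fact q)\<^sup>2 * 4 ^ q)" by (simp only: of_nat_le_iff)
  then show ?thesis by (simp add: mult_ac)
qed

lemma exp_taylor2: "exp (w::real) \<le> 1 + w + w\<^sup>2 / 2 * exp \<bar>w\<bar>"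
proof -
  obtain t where t: "\<bar>t\<bar> \<le> \<bar>w\<bar>" "exp w = (\<Sum>m<2. w ^ m / fact m) + exp t / fact 2 * w ^ 2"
    using Maclaurin_exp_le[of w 2] by blast
  have "exp t \<le> exp \<bar>w\<bar>" using t(1) by simp
  then have "exp t / 2 * w\<^sup>2 \<le> exp \<bar>w\<bar> / 2 * w\<^sup>2" by (intro mult_right_mono) auto
  then show ?thesis using t(2) by (simp add: numeral_2_eq_2 mult_ac)
qed


lemma coord_indep_gen:
  fixes I :: "'i set" and D :: "'a measure"
  assumes D: "prob_space D" and I: "I \<noteq> {}"
  shows "prob_space.indep_vars (PiM I (\<lambda>_. D)) (\<lambda>_. D) (\<lambda>i \<omega>. \<omega> i) I"
proof -
  interpret P: product_prob_space "\<lambda>_. D" I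
    by (simp add: D product_prob_space_def product_prob_space_axioms_def product_sigma_finite_def prob_space_imp_sigma_finite)
  have PS: "prob_space (PiM I (\<lambda>_. D))" by (rule prob_space_PiM) (simp add: D)
  obtain c where c: "c \<in> space D" using prob_space.not_empty[OF D] by blast
  define X where "X = (\<lambda>i (\<omega>::'i \<Rightarrow> 'a). if i \<in> I then \<omega> i else c)"
  have "prob_space.indep_vars (PiM I (\<lambda>_. D)) (\<lambda>_. D) X I"
  proof (subst prob_space.indep_vars_iff_distr_eq_PiM[OF PS I])
    show "X i \<in> measurable (PiM I (\<lambda>_. D)) D" for i
      using c by (cases "i \<in> I") (auto simp: X_def)
    have "distr (PiM I (\<lambda>_. D)) (PiM I (\<lambda>_. D)) (\<lambda>x. \<lambda>i\<in>I. X i x) = distr (PiM I (\<lambda>_. D)) (PiM I (\<lambda>_. D)) (\<lambda>x. x)"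
      by (rule distr_cong) (auto simp: X_def space_PiM PiE_def extensional_def restrict_def fun_eq_iff)
    also have "\<dots> = PiM I (\<lambda>_. D)" by simp
    also have "\<dots> = PiM I (\<lambda>i. distr (PiM I (\<lambda>_. D)) D (X i))"
      apply (rule PiM_cong) apply simp
      apply (subst distr_cong[of _ _ _ _ _ "\<lambda>\<omega>. \<omega> i" for i]) 
      by (auto simp: P.PiM_component X_def)
    finally show "distr (PiM I (\<lambda>_. D)) (PiM I (\<lambda>_. D)) (\<lambda>x. \<lambda>i\<in>I. X i x) = PiM I (\<lambda>i. distr (PiM I (\<lambda>_. D)) D (X i))" .
  qed
  then show ?thesis
    by (rule prob_space.indep_vars_cong[OF PS, THEN iffD1, rotated -1]) (auto simp: X_def)
qed
definition netN :: "nat \<Rightarrow> (nat \<Rightarrow> real) set" where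
  "netN n = {u. (\<forall>j<n. \<exists>k::int. \<bar>k\<bar> \<le> 2 * int n \<and> u j = real_of_int k / (2 * real n)) \<and> (\<forall>j. n \<le> j \<longrightarrow> u j = 0) \<and> (\<Sum>j<n. (u j)\<^sup>2) \<le> 1}"

lemma netN_finite_card: "finite (netN n) \<and> card (netN n) \<le> (4 * n + 1) ^ n"
proof -
  define S where "S = (\<lambda>k::int. real_of_int k / (2 * real n)) ` {-2 * int n..2 * int n}"
  define E where "E f = (\<lambda>j. if j < n then f j else (0::real))" for f :: "nat \<Rightarrow> real"
  have sub: "netN n \<subseteq> E ` (PiE {..<n} (\<lambda>_. S))"
  proof
    fix u assume u: "u \<in> netN n"
    have "u i \<in> S" if "i < n" for i
    proof -
      have "\<exists>k::int. \<bar>k\<bar> \<le> 2 * int n \<and> u i = real_of_int k / (2 * real n)"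
        using u that unfolding netN_def by simp
      then obtain k :: int where "\<bar>k\<bar> \<le> 2 * int n" "u i = real_of_int k / (2 * real n)" by blast
      moreover have "k \<in> {-2 * int n..2 * int n}" using calculation(1) by (simp add: abs_le_iff)
      ultimately show ?thesis unfolding S_def by (intro image_eqI[of _ _ k]) simp_all
    qed
    then have "restrict u {..<n} \<in> PiE {..<n} (\<lambda>_. S)" by (auto simp: PiE_iff)
    moreover have "u = E (restrict u {..<n})"
      using u unfolding netN_def E_def by (auto simp: fun_eq_iff not_less)
    ultimately show "u \<in> E ` (PiE {..<n} (\<lambda>_. S))" by blast
  qed
  have fS: "finite S" by (simp add: S_def)
  have cS: "card S \<le> 4 * n + 1"
  proof -
    have "card S \<le> card {-2 * int n..2 * int n}" unfolding S_def by (rule card_image_le) simp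
    also have "\<dots> = 4 * n + 1" by simp
    finally show ?thesis .
  qed
  have fP: "finite (PiE {..<n} (\<lambda>_. S))" using fS by (simp add: finite_PiE)
  have "card (netN n) \<le> card (E ` (PiE {..<n} (\<lambda>_. S)))" using sub fP by (intro card_mono) auto
  also have "\<dots> \<le> card (PiE {..<n} (\<lambda>_. S))" by (rule card_image_le[OF fP])
  also have "\<dots> = card S ^ n" by (simp add: card_PiE)
  also have "\<dots> \<le> (4 * n + 1) ^ n" by (intro power_mono cS) simp
  finally show ?thesis using sub fP finite_subset by blast
qed

lemma net_exists:
  assumes n: "1 \<le> n" and w: "(\<Sum>j<n. (w j)\<^sup>2) = 1"
  shows "\<exists>u\<in>netN n. 1/2 \<le> (\<Sum>j<n. u j * w j)"
proof -
  define a where "a j = \<lfloor>\<bar>w j\<bar> * (2 * real n)\<rfloor>" for j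
  define u where "u j = (if j < n then sgn (w j) * real_of_int (a j) / (2 * real n) else 0)" for j
  have np: "(0::real) < 2 * real n" using n by simp
  have w1: "\<bar>w j\<bar> \<le> 1" if "j < n" for j
  proof -
    have "(w j)\<^sup>2 \<le> (\<Sum>j<n. (w j)\<^sup>2)" using that by (intro member_le_sum) auto
    then have "\<bar>w j\<bar>\<^sup>2 \<le> 1\<^sup>2" using w by simp
    then show ?thesis by (rule power2_le_imp_le) simp
  qed
  have a0: "0 \<le> a j" for j by (simp add: a_def)
  have aup: "real_of_int (a j) \<le> \<bar>w j\<bar> * (2 * real n)" for j unfolding a_def by (rule of_int_floor_le)
  have alo: "\<bar>w j\<bar> * (2 * real n) - 1 \<le> real_of_int (a j)" for j unfolding a_def by linarith
  have uw: "u j * w j = real_of_int (a j) * \<bar>w j\<bar> / (2 * real n)" if "j < n" for j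
    using that by (cases "w j > 0"; cases "w j < 0") (auto simp: u_def sgn_if a_def)
  have uabs: "\<bar>u j\<bar> \<le> \<bar>w j\<bar>" if "j < n" for j
  proof -
    have "\<bar>u j\<bar> = real_of_int (a j) / (2 * real n)" using that a0 np
      by (auto simp: u_def abs_mult sgn_if a_def)
    also have "\<dots> \<le> \<bar>w j\<bar>" using aup[of j] np by (simp add: divide_le_eq)
    finally show ?thesis .
  qed
  have "u \<in> netN n"
    unfolding netN_def
  proof (intro CollectI conjI allI impI)
    fix j assume j: "j < n"
    show "\<exists>k::int. \<bar>k\<bar> \<le> 2 * int n \<and> u j = real_of_int k / (2 * real n)"
    proof (rule exI[of _ "if w j < 0 then - a j else a j"], intro conjI)
      have "\<bar>w j\<bar> * (2 * real n) \<le> 1 * (2 * real n)" by (intro mult_right_mono w1[OF j]) (use np in auto)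
      then have "real_of_int (a j) \<le> 2 * real n" using aup[of j] by linarith
      then have "a j \<le> 2 * int n" by linarith
      then show "\<bar>if w j < 0 then - a j else a j\<bar> \<le> 2 * int n"
        using a0[of j] by auto
      show "u j = real_of_int (if w j < 0 then - a j else a j) / (2 * real n)"
        using j by (auto simp: u_def sgn_if a_def)
    qed
  next
    fix j assume "n \<le> j" then show "u j = 0" by (simp add: u_def)
  next
    have "(\<Sum>j<n. (u j)\<^sup>2) \<le> (\<Sum>j<n. (w j)\<^sup>2)"
    proof (rule sum_mono)
      fix j assume "j \<in> {..<n}"
      then have "\<bar>u j\<bar>\<^sup>2 \<le> \<bar>w j\<bar>\<^sup>2" using uabs by (intro power_mono) auto
      then show "(u j)\<^sup>2 \<le> (w j)\<^sup>2" by simp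
    qed
    then show "(\<Sum>j<n. (u j)\<^sup>2) \<le> 1" using w by simp
  qed
  moreover have "1/2 \<le> (\<Sum>j<n. u j * w j)"
  proof -
    have "(\<Sum>j<n. (\<bar>w j\<bar> * (2 * real n) - 1) * \<bar>w j\<bar> / (2 * real n)) \<le> (\<Sum>j<n. u j * w j)"
    proof (rule sum_mono)
      fix j assume j: "j \<in> {..<n}"
      have "(\<bar>w j\<bar> * (2 * real n) - 1) * \<bar>w j\<bar> \<le> real_of_int (a j) * \<bar>w j\<bar>"
        by (intro mult_right_mono alo) simp
      then show "(\<bar>w j\<bar> * (2 * real n) - 1) * \<bar>w j\<bar> / (2 * real n) \<le> u j * w j"
        using j np by (simp add: uw divide_right_mono)
    qed
    moreover have "(\<Sum>j<n. (\<bar>w j\<bar> * (2 * real n) - 1) * \<bar>w j\<bar> / (2 * real n)) = (\<Sum>j<n. (w j)\<^sup>2) - (\<Sum>j<n. \<bar>w j\<bar>) / (2 * real n)"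
    proof -
      have pt: "(\<bar>w j\<bar> * (2 * real n) - 1) * \<bar>w j\<bar> / (2 * real n) = (w j)\<^sup>2 - \<bar>w j\<bar> / (2 * real n)" for j
      proof -
        have "\<bar>w j\<bar> * \<bar>w j\<bar> = (w j)\<^sup>2" by (simp add: power2_eq_square)
        then show ?thesis using np by (simp add: field_simps)
      qed
      show ?thesis by (simp only: pt sum_subtractf sum_divide_distrib)
    qed
    moreover have "(\<Sum>j<n. \<bar>w j\<bar>) \<le> real n"
    proof -
      have "(\<Sum>j<n. \<bar>w j\<bar>) \<le> (\<Sum>j<n. 1)" using w1 by (intro sum_mono) auto
      then show ?thesis by simp
    qed
    moreover have "(\<Sum>j<n. \<bar>w j\<bar>) / (2 * real n) \<le> 1/2"
      using calculation(3) np by (simp add: divide_le_eq)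
    ultimately show ?thesis using w by linarith
  qed
  ultimately show ?thesis by blast
qed

definition K1g :: "real \<Rightarrow> real" where "K1g a = 2 * a\<^sup>2 * exp (4 * (exp 1)\<^sup>2)"
definition s0g :: "real \<Rightarrow> real" where "s0g a = 1 / (16 * K1g a * exp 1)"
definition epsg :: "real \<Rightarrow> real" where "epsg a = s0g a / 4"
definition K2g :: "real \<Rightarrow> real" where "K2g a = 3 * exp (s0g a) / (epsg a)\<^sup>2"

lemma K1g_pos: "a > 0 \<Longrightarrow> K1g a > 0" by (simp add: K1g_def)
lemma s0g_pos: "a > 0 \<Longrightarrow> s0g a > 0" using K1g_pos[of a] by (simp add: s0g_def)
lemma epsg_pos: "a > 0 \<Longrightarrow> epsg a > 0" using s0g_pos[of a] by (simp add: epsg_def)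
lemma K2g_pos: "a > 0 \<Longrightarrow> K2g a > 0" using epsg_pos[of a] by (simp add: K2g_def)

locale subg =
  fixes D :: "real measure" and \<alpha> :: real
  assumes PS: "prob_space D" and SB: "sets D = sets borel" and apos: "\<alpha> > 0"
   and I1: "integrable D (\<lambda>u. u)" and m0: "(\<integral>u. u \<partial>D) = 0"
   and I2: "integrable D (\<lambda>u. u\<^sup>2)" and m2: "(\<integral>u. u\<^sup>2 \<partial>D) = 1"
   and SG: "subgauss_norm_eq D \<alpha>"
begin

lemma bmD: "f \<in> borel_measurable borel \<Longrightarrow> f \<in> borel_measurable D"
  using measurable_cong_sets[OF SB refl] by blast

lemma mom1:
  assumes r: "1 \<le> r"
  shows "integrable D (\<lambda>u. \<bar>u\<bar> ^ r) \<and> (\<integral>u. \<bar>u\<bar> ^ r \<partial>D) \<le> (\<alpha> * sqrt (real r)) ^ r"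
proof -
  have eq: "(\<lambda>u. \<bar>u\<bar> powr real r) = (\<lambda>u::real. \<bar>u\<bar> ^ r)"
    using r by (intro ext) (simp add: powr_realpow')
  have int: "integrable D (\<lambda>u. \<bar>u\<bar> ^ r)" using SG r unfolding subgauss_norm_eq_def eq[symmetric] by auto
  define E where "E = (\<integral>u. \<bar>u\<bar> ^ r \<partial>D)"
  have E0: "0 \<le> E" unfolding E_def by (rule integral_nonneg_AE) simp
  have "real r powr (-1/2) * E powr (1 / real r) \<le> \<alpha>"
  proof -
    have "real r powr (-1/2) * E powr (1 / real r)
       = (\<lambda>r. r powr (-1/2) * (\<integral>u. \<bar>u\<bar> powr r \<partial>D) powr (1/r)) (real r)"
      by (simp add: E_def eq)
    also have "\<dots> \<le> (SUP r\<in>{1..}. r powr (-1/2) * (\<integral>u. \<bar>u\<bar> powr r \<partial>D) powr (1/r))"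
      using SG r unfolding subgauss_norm_eq_def by (intro cSUP_upper) auto
    also have "\<dots> = \<alpha>" using SG unfolding subgauss_norm_eq_def by auto
    finally show ?thesis .
  qed
  moreover have "real r powr (-1/2) = inverse (sqrt (real r))"
    by (simp add: powr_minus powr_half_sqrt)
  ultimately have h: "inverse (sqrt (real r)) * E powr (1 / real r) \<le> \<alpha>" by simp
  have sp: "sqrt (real r) > 0" using r by simp
  have "E powr (1 / real r) = sqrt (real r) * (inverse (sqrt (real r)) * E powr (1 / real r))"
    using sp by simp
  also have "\<dots> \<le> sqrt (real r) * \<alpha>" using h sp by (intro mult_left_mono) auto
  finally have "E powr (1 / real r) \<le> \<alpha> * sqrt (real r)" by (simp add: mult.commute)
  then have "(E powr (1 / real r)) ^ r \<le> (\<alpha> * sqrt (real r)) ^ r"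
    by (intro power_mono) auto
  moreover have "(E powr (1 / real r)) ^ r = E"
  proof (cases "E = 0")
    case True then show ?thesis using r by simp
  next
    case False then show ?thesis using r E0 by (simp add: powr_power)
  qed
  ultimately show ?thesis using int E_def by simp
qed

lemma mom:
  shows "integrable D (\<lambda>u. \<bar>u\<bar> ^ r) \<and> (\<integral>u. \<bar>u\<bar> ^ r \<partial>D) \<le> (\<alpha> * sqrt (real r)) ^ r"
proof (cases "r = 0")
  case True
  interpret prob_space D by (rule PS)
  show ?thesis using True by (simp add: prob_space)
next
  case False then show ?thesis using mom1 by simp
qed



lemma mgf_abs:
  assumes mu: "0 \<le> \<mu>"
  shows "integrable D (\<lambda>u. exp (\<mu> * \<bar>u\<bar>)) \<and> (\<integral>u. exp (\<mu> * \<bar>u\<bar>) \<partial>D) \<le> 2 * exp ((exp 1 * \<alpha> * \<mu>)\<^sup>2)"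
proof -
  define E where "E = exp ((exp 1 * (\<alpha> * \<mu>))\<^sup>2)"
  define b where "b r = E * (1/2) ^ r" for r :: nat
  have sb: "b sums (2 * E)" unfolding b_def using sums_mult[OF geometric_sums[of "1/2::real"], of E] by (simp add: mult.commute)
  have "integrable D (\<lambda>u. exp (\<mu> * \<bar>u\<bar>)) \<and> (\<integral>u. exp (\<mu> * \<bar>u\<bar>) \<partial>D) \<le> suminf b"
  proof (rule series_integral_bound[where h = "\<lambda>r u. \<mu> ^ r / fact r * \<bar>u\<bar> ^ r"])
    show "(\<lambda>r. \<mu> ^ r / fact r * \<bar>x\<bar> ^ r) sums exp (\<mu> * \<bar>x\<bar>)" for x
      using exp_converges[of "\<mu> * \<bar>x\<bar>"] by (simp add: power_mult_distrib divide_inverse mult_ac)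
    show "integrable D (\<lambda>u. \<mu> ^ r / fact r * \<bar>u\<bar> ^ r)" for r
      using mom[of r] by simp
    show "0 \<le> \<mu> ^ r / fact r * \<bar>x\<bar> ^ r" for r x using mu by simp
    show "(\<integral>u. \<mu> ^ r / fact r * \<bar>u\<bar> ^ r \<partial>D) \<le> b r" for r
    proof -
      have "(\<integral>u. \<mu> ^ r / fact r * \<bar>u\<bar> ^ r \<partial>D) = \<mu> ^ r / fact r * (\<integral>u. \<bar>u\<bar> ^ r \<partial>D)" by simp
      also have "\<dots> \<le> \<mu> ^ r / fact r * (\<alpha> * sqrt (real r)) ^ r"
        using mom[of r] mu by (intro mult_left_mono) auto
      also have "\<dots> = (\<alpha> * \<mu>) ^ r * sqrt (real r) ^ r / fact r" by (simp add: power_mult_distrib)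
      also have "\<dots> \<le> b r" unfolding b_def E_def using apos mu by (intro num_N1) simp
      finally show ?thesis .
    qed
    show "summable b" using sb by (simp add: sums_iff)
    show "(\<lambda>u. exp (\<mu> * \<bar>u\<bar>)) \<in> borel_measurable D" by (intro bmD) measurable
  qed
  then show ?thesis using sb by (simp add: sums_iff E_def mult_ac)
qed

abbreviation "K1 \<equiv> K1g \<alpha>"
abbreviation "s0 \<equiv> s0g \<alpha>"
abbreviation "eps \<equiv> epsg \<alpha>"
abbreviation "K2 \<equiv> K2g \<alpha>"

lemma K1_pos: "K1 > 0" using apos by (rule K1g_pos)
lemma s0_pos: "s0 > 0" using apos by (rule s0g_pos)
lemma eps_pos: "eps > 0" using apos by (rule epsg_pos)

lemma exp_taylor2: "exp (w::real) \<le> 1 + w + w\<^sup>2 / 2 * exp \<bar>w\<bar>"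
proof -
  obtain t where t: "\<bar>t\<bar> \<le> \<bar>w\<bar>" "exp w = (\<Sum>m<2. w ^ m / fact m) + exp t / fact 2 * w ^ 2"
    using Maclaurin_exp_le[of w 2] by blast
  have "exp t \<le> exp \<bar>w\<bar>" using t(1) by simp
  then have "exp t / 2 * w\<^sup>2 \<le> exp \<bar>w\<bar> / 2 * w\<^sup>2" by (intro mult_right_mono) auto
  then show ?thesis using t(2) by (simp add: numeral_2_eq_2 mult_ac)
qed

lemma mgf:
  shows "integrable D (\<lambda>u. exp (l * u)) \<and> (\<integral>u. exp (l * u) \<partial>D) \<le> exp (K1 * l\<^sup>2)"
proof -
  interpret prob_space D by (rule PS)
  have im: "integrable D (\<lambda>u. exp (l * u))"
    by (rule Bochner_Integration.integrable_bound[OF conjunct1[OF mgf_abs[of "\<bar>l\<bar>"]]])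
       (auto intro!: bmD AE_I2 simp: abs_mult[symmetric] intro: abs_ge_self)
  have le: "(\<integral>u. exp (l * u) \<partial>D) \<le> exp (K1 * l\<^sup>2)"
  proof (cases "\<bar>l\<bar> \<le> 1 / \<alpha>")
    case True
    define g where "g u = 2 * \<alpha>\<^sup>2 * exp ((2/\<alpha>) * \<bar>u\<bar>)" for u
    have ig: "integrable D g" unfolding g_def using mgf_abs[of "2/\<alpha>"] apos by simp
    have Eg: "(\<integral>u. g u \<partial>D) \<le> 2 * \<alpha>\<^sup>2 * (2 * exp (4 * (exp 1)\<^sup>2))"
    proof -
      have "(\<integral>u. g u \<partial>D) = 2 * \<alpha>\<^sup>2 * (\<integral>u. exp ((2/\<alpha>) * \<bar>u\<bar>) \<partial>D)" by (simp add: g_def)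
      also have "\<dots> \<le> 2 * \<alpha>\<^sup>2 * (2 * exp ((exp 1 * \<alpha> * (2/\<alpha>))\<^sup>2))"
        using mgf_abs[of "2/\<alpha>"] apos by (intro mult_left_mono) auto
      also have "(exp 1 * \<alpha> * (2/\<alpha>))\<^sup>2 = 4 * (exp 1)\<^sup>2" using apos by (simp add: power2_eq_square field_simps)
      finally show ?thesis .
    qed
    have pw: "u\<^sup>2 * exp (\<bar>l\<bar> * \<bar>u\<bar>) \<le> g u" for u
    proof -
      have t: "1 + \<bar>u\<bar>/\<alpha> + (\<bar>u\<bar>/\<alpha>)\<^sup>2 / 2 \<le> exp (\<bar>u\<bar>/\<alpha>)"
        using exp_lower_Taylor_quadratic[of "\<bar>u\<bar>/\<alpha>"] apos by simp
      have "0 \<le> \<bar>u\<bar>/\<alpha>" using apos by simp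
      then have a: "(\<bar>u\<bar>/\<alpha>)\<^sup>2 / 2 \<le> exp (\<bar>u\<bar>/\<alpha>)" using t by linarith
      then have "u\<^sup>2 \<le> 2 * \<alpha>\<^sup>2 * exp (\<bar>u\<bar>/\<alpha>)" using apos by (simp add: field_simps power2_eq_square)
      moreover have "exp (\<bar>l\<bar> * \<bar>u\<bar>) \<le> exp (\<bar>u\<bar>/\<alpha>)"
        using True apos by (simp add: mult_right_mono divide_inverse mult.commute[of "\<bar>u\<bar>"] mult_right_mono[of "\<bar>l\<bar>" "1/\<alpha>" "\<bar>u\<bar>"])
      ultimately have "u\<^sup>2 * exp (\<bar>l\<bar> * \<bar>u\<bar>) \<le> (2 * \<alpha>\<^sup>2 * exp (\<bar>u\<bar>/\<alpha>)) * exp (\<bar>u\<bar>/\<alpha>)"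
        by (intro mult_mono) auto
      also have "\<dots> = g u"
      proof -
        have "exp (\<bar>u\<bar>/\<alpha>) * exp (\<bar>u\<bar>/\<alpha>) = exp ((2/\<alpha>) * \<bar>u\<bar>)"
        proof -
          have e: "(2/\<alpha>) * \<bar>u\<bar> = \<bar>u\<bar>/\<alpha> + \<bar>u\<bar>/\<alpha>" by (simp add: field_simps)
          show ?thesis by (simp only: e exp_add)
        qed
        then show ?thesis by (simp add: g_def mult_ac)
      qed
      finally show ?thesis .
    qed
    have ih: "integrable D (\<lambda>u. u\<^sup>2 * exp (\<bar>l\<bar> * \<bar>u\<bar>))"
    proof (rule Bochner_Integration.integrable_bound[OF ig])
      show "(\<lambda>u. u\<^sup>2 * exp (\<bar>l\<bar> * \<bar>u\<bar>)) \<in> borel_measurable D" by (intro bmD) measurable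
      have "norm (u\<^sup>2 * exp (\<bar>l\<bar> * \<bar>u\<bar>)) \<le> norm (g u)" for u
        using pw[of u] by (simp add: g_def)
      then show "AE u in D. norm (u\<^sup>2 * exp (\<bar>l\<bar> * \<bar>u\<bar>)) \<le> norm (g u)" by simp
    qed
    have "(\<integral>u. exp (l * u) \<partial>D) \<le> (\<integral>u. 1 + l * u + l\<^sup>2 / 2 * (u\<^sup>2 * exp (\<bar>l\<bar> * \<bar>u\<bar>)) \<partial>D)"
    proof (rule integral_mono[OF im])
      show "integrable D (\<lambda>u. 1 + l * u + l\<^sup>2 / 2 * (u\<^sup>2 * exp (\<bar>l\<bar> * \<bar>u\<bar>)))"
        using ih I1 by (intro Bochner_Integration.integrable_add integrable_mult_right) (auto simp: prob_space)
      show "exp (l * u) \<le> 1 + l * u + l\<^sup>2 / 2 * (u\<^sup>2 * exp (\<bar>l\<bar> * \<bar>u\<bar>))" for u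
        using exp_taylor2[of "l * u"] by (simp add: power_mult_distrib abs_mult mult_ac)
    qed
    also have "\<dots> = 1 + l * (\<integral>u. u \<partial>D) + l\<^sup>2 / 2 * (\<integral>u. u\<^sup>2 * exp (\<bar>l\<bar> * \<bar>u\<bar>) \<partial>D)"
      using ih I1 by (simp add: prob_space)
    also have "\<dots> \<le> 1 + l\<^sup>2 / 2 * (2 * \<alpha>\<^sup>2 * (2 * exp (4 * (exp 1)\<^sup>2)))"
    proof -
      have "(\<integral>u. u\<^sup>2 * exp (\<bar>l\<bar> * \<bar>u\<bar>) \<partial>D) \<le> (\<integral>u. g u \<partial>D)"
        by (rule integral_mono[OF ih ig]) (rule pw)
      then have "(\<integral>u. u\<^sup>2 * exp (\<bar>l\<bar> * \<bar>u\<bar>) \<partial>D) \<le> 2 * \<alpha>\<^sup>2 * (2 * exp (4 * (exp 1)\<^sup>2))"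
        using Eg by linarith
      then have "l\<^sup>2 / 2 * (\<integral>u. u\<^sup>2 * exp (\<bar>l\<bar> * \<bar>u\<bar>) \<partial>D) \<le> l\<^sup>2 / 2 * (2 * \<alpha>\<^sup>2 * (2 * exp (4 * (exp 1)\<^sup>2)))"
        by (intro mult_left_mono) auto
      then show ?thesis using m0 by simp
    qed
    also have "\<dots> = 1 + K1 * l\<^sup>2" by (simp add: K1g_def)
    also have "\<dots> \<le> exp (K1 * l\<^sup>2)" by (rule exp_ge_add_one_self)
    finally show ?thesis .
  next
    case False
    then have "1 < \<alpha> * \<bar>l\<bar>" using apos by (simp add: field_simps)
    then have "1 \<le> (\<alpha> * \<bar>l\<bar>) ^ 2" by (intro one_le_power) simp
    then have big: "1 \<le> \<alpha>\<^sup>2 * l\<^sup>2" by (simp add: power_mult_distrib)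
    have "(\<integral>u. exp (l * u) \<partial>D) \<le> (\<integral>u. exp (\<bar>l\<bar> * \<bar>u\<bar>) \<partial>D)"
      using im mgf_abs[of "\<bar>l\<bar>"] by (intro integral_mono) (auto simp: abs_mult[symmetric])
    also have "\<dots> \<le> 2 * exp ((exp 1 * \<alpha> * \<bar>l\<bar>)\<^sup>2)" using mgf_abs[of "\<bar>l\<bar>"] by simp
    also have "\<dots> \<le> exp (\<alpha>\<^sup>2 * l\<^sup>2) * exp ((exp 1)\<^sup>2 * (\<alpha>\<^sup>2 * l\<^sup>2))"
    proof -
      have "2 \<le> exp (1::real)" using exp_ge_add_one_self[of 1] by simp
      also have "\<dots> \<le> exp (\<alpha>\<^sup>2 * l\<^sup>2)" using big by simp
      finally show ?thesis by (intro mult_mono) (auto simp: power_mult_distrib)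
    qed
    also have "\<dots> = exp ((1 + (exp 1)\<^sup>2) * \<alpha>\<^sup>2 * l\<^sup>2)" by (simp add: mult_exp_exp[symmetric] algebra_simps)
    also have "\<dots> \<le> exp (K1 * l\<^sup>2)"
    proof -
      have "1 + (exp 1)\<^sup>2 \<le> 2 * exp (4 * (exp (1::real))\<^sup>2)"
      proof -
        have "1 \<le> exp (4 * (exp (1::real))\<^sup>2)" by simp
        moreover have "(exp 1)\<^sup>2 \<le> exp (4 * (exp (1::real))\<^sup>2)"
        proof -
          have "(exp (1::real))\<^sup>2 \<le> 1 + 4 * (exp (1::real))\<^sup>2" by simp
          also have "\<dots> \<le> exp (4 * (exp (1::real))\<^sup>2)" by (rule exp_ge_add_one_self)
          finally show ?thesis .
        qed
        ultimately show ?thesis by linarith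
      qed
      then have "(1 + (exp 1)\<^sup>2) * (\<alpha>\<^sup>2 * l\<^sup>2) \<le> (2 * exp (4 * (exp 1)\<^sup>2)) * (\<alpha>\<^sup>2 * l\<^sup>2)"
        by (intro mult_right_mono) auto
      then show ?thesis by (simp add: K1g_def mult_ac)
    qed
    finally show ?thesis .
  qed
  show ?thesis using im le by simp
qed

end

locale subg_prod = subg +
  fixes I :: "'i set"
  assumes finI: "finite I"
begin

abbreviation "M \<equiv> PiM I (\<lambda>_. D)"

lemma PP: "product_prob_space (\<lambda>_. D)"
  by (simp add: PS product_prob_space_def product_prob_space_axioms_def product_sigma_finite_def prob_space_imp_sigma_finite)

lemma PSM: "prob_space M" by (rule prob_space_PiM) (simp add: PS)

lemma prodint:
  fixes f :: "'i \<Rightarrow> real \<Rightarrow> real"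
  assumes J: "J \<subseteq> I" and f: "\<And>j. j \<in> J \<Longrightarrow> integrable D (f j)"
  shows "integrable M (\<lambda>\<omega>. \<Prod>j\<in>J. f j (\<omega> j)) \<and> (\<integral>\<omega>. (\<Prod>j\<in>J. f j (\<omega> j)) \<partial>M) = (\<Prod>j\<in>J. \<integral>u. f j u \<partial>D)"
proof -
  interpret P: product_prob_space "\<lambda>_. D" I by (rule PP)
  have one: "(\<integral>u. 1 \<partial>D) = (1::real)" using prob_space.prob_space[OF PS] by simp
  define g where "g j = (if j \<in> J then f j else (\<lambda>_. 1))" for j
  have gi: "integrable D (g j)" if "j \<in> I" for j using f by (simp add: g_def)
  have eq: "(\<lambda>\<omega>. \<Prod>j\<in>J. f j (\<omega> j)) = (\<lambda>\<omega>. \<Prod>j\<in>I. g j (\<omega> j))"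
    using J finI by (intro ext prod.mono_neutral_cong_left) (auto simp: g_def)
  have eq2: "(\<Prod>j\<in>I. \<integral>u. g j u \<partial>D) = (\<Prod>j\<in>J. \<integral>u. f j u \<partial>D)"
    using J finI by (intro prod.mono_neutral_cong_right) (auto simp: g_def one prob_space.prob_space[OF PS])
  show ?thesis unfolding eq
    using P.product_integrable_prod[OF finI gi] P.product_integral_prod[OF finI gi] eq2 by simp
qed

lemma Zmgf:
  assumes J: "J \<subseteq> I"
  shows "integrable M (\<lambda>\<omega>. exp (l * (\<Sum>j\<in>J. v j * \<omega> j))) \<and>
         (\<integral>\<omega>. exp (l * (\<Sum>j\<in>J. v j * \<omega> j)) \<partial>M) \<le> exp (K1 * l\<^sup>2 * (\<Sum>j\<in>J. (v j)\<^sup>2))"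
proof -
  have finJ: "finite J" using J finI finite_subset by blast
  have eq: "(\<lambda>\<omega>. exp (l * (\<Sum>j\<in>J. v j * \<omega> j))) = (\<lambda>\<omega>. \<Prod>j\<in>J. (\<lambda>u. exp ((l * v j) * u)) (\<omega> j))"
    using finJ by (simp add: sum_distrib_left exp_sum mult_ac)
  have P: "integrable M (\<lambda>\<omega>. \<Prod>j\<in>J. (\<lambda>u. exp ((l * v j) * u)) (\<omega> j)) \<and> (\<integral>\<omega>. (\<Prod>j\<in>J. (\<lambda>u. exp ((l * v j) * u)) (\<omega> j)) \<partial>M) = (\<Prod>j\<in>J. \<integral>u. exp ((l * v j) * u) \<partial>D)"
    by (rule prodint[OF J]) (use mgf in blast)
  have "(\<Prod>j\<in>J. \<integral>u. exp ((l * v j) * u) \<partial>D) \<le> (\<Prod>j\<in>J. exp (K1 * (l * v j)\<^sup>2))"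
    by (intro prod_mono) (use mgf in \<open>auto intro: integral_nonneg_AE\<close>)
  also have "\<dots> = exp (K1 * l\<^sup>2 * (\<Sum>j\<in>J. (v j)\<^sup>2))"
    using finJ by (simp add: exp_sum[symmetric] sum_distrib_left power_mult_distrib mult_ac)
  finally show ?thesis using P unfolding eq by simp
qed

lemma Zmeas: "(\<lambda>\<omega>. \<Sum>j\<in>J. v j * \<omega> j) \<in> borel_measurable M" if "J \<subseteq> I" for J v
proof -
  have "(\<lambda>\<omega>. \<omega> j) \<in> borel_measurable M" if "j \<in> J" for j
    using \<open>J \<subseteq> I\<close> that measurable_component_singleton[of j I "\<lambda>_. D"] measurable_cong_sets[OF refl SB] by blast
  then show ?thesis by (intro borel_measurable_sum borel_measurable_times) auto
qed

lemma Zpow: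
  assumes J: "J \<subseteq> I" and v: "(\<Sum>j\<in>J. (v j)\<^sup>2) \<le> 1" and q: "1 \<le> q"
  shows "integrable M (\<lambda>\<omega>. (\<Sum>j\<in>J. v j * \<omega> j) ^ (2*q)) \<and>
         (\<integral>\<omega>. (\<Sum>j\<in>J. v j * \<omega> j) ^ (2*q) \<partial>M) \<le> 2 * fact (2*q) * (K1 * exp 1 / q) ^ q"
proof -
  define Z where "Z \<omega> = (\<Sum>j\<in>J. v j * \<omega> j)" for \<omega> :: "'i \<Rightarrow> real"
  define \<mu> where "\<mu> = sqrt (q / K1)"
  have mu0: "\<mu> > 0" using q K1_pos by (simp add: \<mu>_def)
  have mu2: "\<mu>\<^sup>2 = q / K1" using q K1_pos by (simp add: \<mu>_def)
  define c where "c = fact (2*q) / \<mu> ^ (2*q)"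
  have c0: "c \<ge> 0" using mu0 by (simp add: c_def)
  have pw: "Z \<omega> ^ (2*q) \<le> c * (exp (\<mu> * Z \<omega>) + exp ((-\<mu>) * Z \<omega>))" for \<omega>
  proof -
    have "(\<mu> * \<bar>Z \<omega>\<bar>) ^ (2*q) / fact (2*q) \<le> exp (\<mu> * \<bar>Z \<omega>\<bar>)"
      using mu0 by (intro pow_fact_le_exp) simp
    also have "\<dots> \<le> exp (\<mu> * Z \<omega>) + exp ((-\<mu>) * Z \<omega>)"
      by (cases "Z \<omega> \<ge> 0") (auto simp: abs_if add_increasing add_increasing2)
    finally have a: "(\<mu> * \<bar>Z \<omega>\<bar>) ^ (2*q) \<le> fact (2*q) * (exp (\<mu> * Z \<omega>) + exp ((-\<mu>) * Z \<omega>))"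
      by (simp add: divide_le_eq mult.commute)
    have "Z \<omega> ^ (2*q) = (\<mu> * \<bar>Z \<omega>\<bar>) ^ (2*q) / \<mu> ^ (2*q)"
      using mu0 by (simp add: power_mult_distrib power_even_abs)
    also have "\<dots> \<le> fact (2*q) * (exp (\<mu> * Z \<omega>) + exp ((-\<mu>) * Z \<omega>)) / \<mu> ^ (2*q)"
      using a mu0 by (intro divide_right_mono) auto
    finally show ?thesis by (simp add: c_def)
  qed
  have i1: "integrable M (\<lambda>\<omega>. exp (\<mu> * Z \<omega>))" and i2: "integrable M (\<lambda>\<omega>. exp ((-\<mu>) * Z \<omega>))"
    using Zmgf[OF J, of \<mu> v] Zmgf[OF J, of "-\<mu>" v] by (simp_all add: Z_def)
  have ib: "integrable M (\<lambda>\<omega>. c * (exp (\<mu> * Z \<omega>) + exp ((-\<mu>) * Z \<omega>)))"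
    using i1 i2 by simp
  have iz: "integrable M (\<lambda>\<omega>. Z \<omega> ^ (2*q))"
  proof (rule Bochner_Integration.integrable_bound[OF ib])
    show "(\<lambda>\<omega>. Z \<omega> ^ (2*q)) \<in> borel_measurable M" unfolding Z_def using Zmeas[OF J] by measurable
    show "AE \<omega> in M. norm (Z \<omega> ^ (2*q)) \<le> norm (c * (exp (\<mu> * Z \<omega>) + exp ((-\<mu>) * Z \<omega>)))"
      using pw c0 by (intro AE_I2) (simp add: power_mult zero_le_power2 abs_mult)
  qed
  have e1: "(\<integral>\<omega>. exp (l * Z \<omega>) \<partial>M) \<le> exp (K1 * \<mu>\<^sup>2)" if "l\<^sup>2 = \<mu>\<^sup>2" for l
  proof -
    have "(\<integral>\<omega>. exp (l * Z \<omega>) \<partial>M) \<le> exp (K1 * l\<^sup>2 * (\<Sum>j\<in>J. (v j)\<^sup>2))"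
      using Zmgf[OF J, of l v] by (simp add: Z_def)
    also have "\<dots> \<le> exp (K1 * \<mu>\<^sup>2)"
      using v K1_pos that by (simp add: mult_left_le)
    finally show ?thesis .
  qed
  have "(\<integral>\<omega>. Z \<omega> ^ (2*q) \<partial>M) \<le> (\<integral>\<omega>. c * (exp (\<mu> * Z \<omega>) + exp ((-\<mu>) * Z \<omega>)) \<partial>M)"
    by (rule integral_mono[OF iz ib pw])
  also have "\<dots> = c * ((\<integral>\<omega>. exp (\<mu> * Z \<omega>) \<partial>M) + (\<integral>\<omega>. exp ((-\<mu>) * Z \<omega>) \<partial>M))"
    using i1 i2 by simp
  also have "\<dots> \<le> c * (exp (K1 * \<mu>\<^sup>2) + exp (K1 * \<mu>\<^sup>2))"
    using e1[of \<mu>] e1[of "-\<mu>"] c0 by (intro mult_left_mono add_mono) auto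
  also have "\<dots> = 2 * fact (2*q) * (K1 * exp 1 / q) ^ q"
  proof -
    have m: "\<mu> ^ (2*q) = (q / K1) ^ q" by (simp add: power_mult mu2)
    have ce: "c = fact (2*q) * (K1 / q) ^ q" using q K1_pos by (simp add: c_def m power_divide)
    have ee: "exp (K1 * \<mu>\<^sup>2) = exp 1 ^ q" using K1_pos by (simp add: mu2 exp_of_nat_mult[symmetric])
    have "c * (exp (K1 * \<mu>\<^sup>2) + exp (K1 * \<mu>\<^sup>2)) = 2 * fact (2*q) * ((K1 / q) ^ q * exp 1 ^ q)"
      by (simp add: ce ee)
    also have "(K1 / q) ^ q * exp 1 ^ q = (K1 * exp 1 / q) ^ q" by (simp add: power_mult_distrib[symmetric])
    finally show ?thesis .
  qed
  finally show ?thesis using iz by (simp add: Z_def)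
qed


lemma Zsq:
  assumes J: "J \<subseteq> I" and v: "(\<Sum>j\<in>J. (v j)\<^sup>2) \<le> 1" and s: "0 \<le> s" "s \<le> s0"
  shows "integrable M (\<lambda>\<omega>. exp (s * (\<Sum>j\<in>J. v j * \<omega> j)\<^sup>2)) \<and>
         (\<integral>\<omega>. exp (s * (\<Sum>j\<in>J. v j * \<omega> j)\<^sup>2) \<partial>M) \<le> 3"
proof -
  interpret PM: prob_space M by (rule PSM)
  define Z where "Z \<omega> = (\<Sum>j\<in>J. v j * \<omega> j)" for \<omega> :: "'i \<Rightarrow> real"
  define b where "b q = 2 * (1/4::real) ^ q" for q :: nat
  have sb: "b sums (8/3)" unfolding b_def using sums_mult[OF geometric_sums[of "1/4::real"], of 2] by simp
  have "integrable M (\<lambda>\<omega>. exp (s * (Z \<omega>)\<^sup>2)) \<and> (\<integral>\<omega>. exp (s * (Z \<omega>)\<^sup>2) \<partial>M) \<le> suminf b"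
  proof (rule series_integral_bound[where h = "\<lambda>q \<omega>. s ^ q / fact q * Z \<omega> ^ (2*q)"])
    show "(\<lambda>q. s ^ q / fact q * Z \<omega> ^ (2*q)) sums exp (s * (Z \<omega>)\<^sup>2)" for \<omega>
    proof -
      have "(\<lambda>q. s ^ q / fact q * Z \<omega> ^ (2*q)) = (\<lambda>q. (s * (Z \<omega>)\<^sup>2) ^ q /\<^sub>R fact q)"
        by (intro ext) (simp only: power_mult power_mult_distrib, simp add: divide_inverse mult_ac)
      then show ?thesis using exp_converges[of "s * (Z \<omega>)\<^sup>2"] by simp
    qed
    show "integrable M (\<lambda>\<omega>. s ^ q / fact q * Z \<omega> ^ (2*q))" for q
    proof (cases "q = 0")
      case True then show ?thesis by simp
    next
      case False then show ?thesis using Zpow[OF J v, of q] by (simp add: Z_def)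
    qed
    show "0 \<le> s ^ q / fact q * Z \<omega> ^ (2*q)" for q \<omega> using s by (simp add: power_mult)
    show "(\<integral>\<omega>. s ^ q / fact q * Z \<omega> ^ (2*q) \<partial>M) \<le> b q" for q
    proof (cases "q = 0")
      case True then show ?thesis by (simp add: b_def PM.prob_space)
    next
      case False
      have "(\<integral>\<omega>. s ^ q / fact q * Z \<omega> ^ (2*q) \<partial>M) = s ^ q / fact q * (\<integral>\<omega>. Z \<omega> ^ (2*q) \<partial>M)" by simp
      also have "\<dots> \<le> s ^ q / fact q * (2 * fact (2*q) * (K1 * exp 1 / q) ^ q)"
        using Zpow[OF J v, of q] False s by (intro mult_left_mono) (auto simp: Z_def)
      also have "\<dots> \<le> s ^ q / fact q * (2 * (4 ^ q * (fact q)\<^sup>2) * (K1 * exp 1 / q) ^ q)"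
        using fact_double[of q] s K1_pos by (intro mult_left_mono mult_right_mono) auto
      also have "\<dots> = 2 * (4 * s * K1 * exp 1) ^ q * (fact q / real q ^ q)"
        using False by (simp add: power2_eq_square power_mult_distrib power_divide field_simps)
      also have "\<dots> \<le> 2 * (1/4) ^ q * 1"
      proof (intro mult_mono mult_left_mono power_mono)
        show "4 * s * K1 * exp 1 \<le> 1/4" using s K1_pos by (simp add: s0g_def K1g_def field_simps)
        show "fact q / real q ^ q \<le> 1" using False fact_le_power[of q, where 'a=real] by simp
      qed (use s K1_pos in auto)
      finally show ?thesis by (simp add: b_def)
    qed
    show "summable b" using sb by (simp add: sums_iff)
    show "(\<lambda>\<omega>. exp (s * (Z \<omega>)\<^sup>2)) \<in> borel_measurable M" unfolding Z_def using Zmeas[OF J] by measurable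
  qed
  moreover have "suminf b \<le> 3" using sb by (simp add: sums_iff)
  ultimately show ?thesis by (simp add: Z_def)
qed

lemma Ejk:
  assumes j: "j \<in> I" and k: "k \<in> I"
  shows "integrable M (\<lambda>\<omega>. \<omega> j * \<omega> k) \<and> (\<integral>\<omega>. \<omega> j * \<omega> k \<partial>M) = (if j = k then 1 else 0)"
proof (cases "j = k")
  case True
  have "integrable M (\<lambda>\<omega>. \<Prod>i\<in>{j}. (\<lambda>u. u\<^sup>2) (\<omega> i)) \<and> (\<integral>\<omega>. (\<Prod>i\<in>{j}. (\<lambda>u. u\<^sup>2) (\<omega> i)) \<partial>M) = (\<Prod>i\<in>{j}. \<integral>u. (\<lambda>u. u\<^sup>2) u \<partial>D)"
    by (rule prodint) (use j I2 in auto)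
  then show ?thesis using True m2 by (simp add: power2_eq_square)
next
  case False
  have "integrable M (\<lambda>\<omega>. \<Prod>i\<in>{j,k}. (\<lambda>u. u) (\<omega> i)) \<and> (\<integral>\<omega>. (\<Prod>i\<in>{j,k}. (\<lambda>u. u) (\<omega> i)) \<partial>M) = (\<Prod>i\<in>{j,k}. \<integral>u. (\<lambda>u. u) u \<partial>D)"
    by (rule prodint) (use j k I1 in auto)
  then show ?thesis using False m0 by simp
qed

lemma ZZ:
  assumes J: "J \<subseteq> I"
  shows "integrable M (\<lambda>\<omega>. (\<Sum>j\<in>J. v j * \<omega> j) * (\<Sum>j\<in>J. w j * \<omega> j)) \<and>
    (\<integral>\<omega>. (\<Sum>j\<in>J. v j * \<omega> j) * (\<Sum>j\<in>J. w j * \<omega> j) \<partial>M) = (\<Sum>j\<in>J. v j * w j)"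
proof -
  have finJ: "finite J" using J finI finite_subset by blast
  have eq: "(\<lambda>\<omega>. (\<Sum>j\<in>J. v j * \<omega> j) * (\<Sum>j\<in>J. w j * \<omega> j)) = (\<lambda>\<omega>. \<Sum>j\<in>J. \<Sum>k\<in>J. (v j * w k) * (\<omega> j * \<omega> k))"
    by (intro ext) (simp add: sum_product mult_ac)
  have it: "integrable M (\<lambda>\<omega>. (v j * w k) * (\<omega> j * \<omega> k))" if "j \<in> J" "k \<in> J" for j k
    using Ejk[of j k] that J by auto
  have "integrable M (\<lambda>\<omega>. \<Sum>j\<in>J. \<Sum>k\<in>J. (v j * w k) * (\<omega> j * \<omega> k))"
    using it by (intro Bochner_Integration.integrable_sum) auto
  moreover have "(\<integral>\<omega>. (\<Sum>j\<in>J. \<Sum>k\<in>J. (v j * w k) * (\<omega> j * \<omega> k)) \<partial>M) = (\<Sum>j\<in>J. \<Sum>k\<in>J. (v j * w k) * (if j = k then 1 else 0))"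
  proof -
    have "(\<integral>\<omega>. (\<Sum>j\<in>J. \<Sum>k\<in>J. (v j * w k) * (\<omega> j * \<omega> k)) \<partial>M) = (\<Sum>j\<in>J. \<integral>\<omega>. (\<Sum>k\<in>J. (v j * w k) * (\<omega> j * \<omega> k)) \<partial>M)"
      using it by (intro Bochner_Integration.integral_sum Bochner_Integration.integrable_sum) auto
    also have "\<dots> = (\<Sum>j\<in>J. \<Sum>k\<in>J. \<integral>\<omega>. (v j * w k) * (\<omega> j * \<omega> k) \<partial>M)"
      using it by (intro sum.cong refl Bochner_Integration.integral_sum) auto
    also have "\<dots> = (\<Sum>j\<in>J. \<Sum>k\<in>J. (v j * w k) * (if j = k then 1 else 0))"
    proof (intro sum.cong refl)
      fix j k assume "j \<in> J" "k \<in> J"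
      then have "(\<integral>\<omega>. \<omega> j * \<omega> k \<partial>M) = (if j = k then 1 else 0)" using Ejk J by blast
      then show "(\<integral>\<omega>. (v j * w k) * (\<omega> j * \<omega> k) \<partial>M) = (v j * w k) * (if j = k then 1 else 0)"
        by simp
    qed
    finally show ?thesis .
  qed
  moreover have "(\<Sum>j\<in>J. \<Sum>k\<in>J. (v j * w k) * (if j = k then 1 else 0)) = (\<Sum>j\<in>J. v j * w j)"
    using finJ by (simp add: if_distrib cong: if_cong)
  ultimately show ?thesis unfolding eq by simp
qed


lemma Wmgf:
  assumes J: "J \<subseteq> I" and v: "(\<Sum>j\<in>J. (v j)\<^sup>2) \<le> 1" and w: "(\<Sum>j\<in>J. (w j)\<^sup>2) \<le> 1"
    and g: "\<bar>\<gamma>\<bar> \<le> 2" and l: "\<bar>l\<bar> \<le> eps"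
  shows "integrable M (\<lambda>\<omega>. exp (l * (\<gamma> * ((\<Sum>j\<in>J. v j * \<omega> j) * (\<Sum>j\<in>J. w j * \<omega> j) - (\<Sum>j\<in>J. v j * w j))))) \<and>
    (\<integral>\<omega>. exp (l * (\<gamma> * ((\<Sum>j\<in>J. v j * \<omega> j) * (\<Sum>j\<in>J. w j * \<omega> j) - (\<Sum>j\<in>J. v j * w j)))) \<partial>M) \<le> exp (K2 * l\<^sup>2)"
proof -
  interpret PM: prob_space M by (rule PSM)
  define Zv where "Zv \<omega> = (\<Sum>j\<in>J. v j * \<omega> j)" for \<omega> :: "'i \<Rightarrow> real"
  define Zw where "Zw \<omega> = (\<Sum>j\<in>J. w j * \<omega> j)" for \<omega> :: "'i \<Rightarrow> real"
  define c where "c = (\<Sum>j\<in>J. v j * w j)"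
  define W where "W \<omega> = \<gamma> * (Zv \<omega> * Zw \<omega> - c)" for \<omega>
  define G where "G \<omega> = exp (s0 * (Zv \<omega>)\<^sup>2) + exp (s0 * (Zw \<omega>)\<^sup>2)" for \<omega>
  have mZv[measurable]: "Zv \<in> borel_measurable M" unfolding Zv_def using Zmeas[OF J] by (simp add: fun_eq_iff)
  have mZw[measurable]: "Zw \<in> borel_measurable M" unfolding Zw_def using Zmeas[OF J] by (simp add: fun_eq_iff)
  have mW[measurable]: "W \<in> borel_measurable M" unfolding W_def by measurable
  have c1: "\<bar>c\<bar> \<le> 1"
  proof -
    have "\<bar>c\<bar> \<le> (\<Sum>j\<in>J. \<bar>v j * w j\<bar>)" unfolding c_def by (rule sum_abs)
    also have "\<dots> \<le> (\<Sum>j\<in>J. ((v j)\<^sup>2 + (w j)\<^sup>2) / 2)"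
    proof (rule sum_mono)
      fix j
      have "0 \<le> (\<bar>v j\<bar> - \<bar>w j\<bar>)\<^sup>2" by simp
      then show "\<bar>v j * w j\<bar> \<le> ((v j)\<^sup>2 + (w j)\<^sup>2) / 2"
        by (simp add: power2_eq_square abs_mult algebra_simps)
    qed
    also have "\<dots> = ((\<Sum>j\<in>J. (v j)\<^sup>2) + (\<Sum>j\<in>J. (w j)\<^sup>2)) / 2"
      by (simp only: sum_divide_distrib[symmetric] sum.distrib)
    also have "\<dots> \<le> 1" using v w by simp
    finally show ?thesis .
  qed
  have Wb: "\<bar>W \<omega>\<bar> \<le> (Zv \<omega>)\<^sup>2 + (Zw \<omega>)\<^sup>2 + 2" for \<omega>
  proof -
    have "\<bar>W \<omega>\<bar> = \<bar>\<gamma>\<bar> * \<bar>Zv \<omega> * Zw \<omega> - c\<bar>" by (simp add: W_def abs_mult)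
    also have "\<dots> \<le> 2 * (\<bar>Zv \<omega>\<bar> * \<bar>Zw \<omega>\<bar> + 1)"
    proof (rule mult_mono)
      show "\<bar>Zv \<omega> * Zw \<omega> - c\<bar> \<le> \<bar>Zv \<omega>\<bar> * \<bar>Zw \<omega>\<bar> + 1"
        using c1 abs_triangle_ineq4[of "Zv \<omega> * Zw \<omega>" c] by (simp add: abs_mult)
    qed (use g in auto)
    also have "\<dots> \<le> (Zv \<omega>)\<^sup>2 + (Zw \<omega>)\<^sup>2 + 2"
    proof -
      have "0 \<le> (\<bar>Zv \<omega>\<bar> - \<bar>Zw \<omega>\<bar>)\<^sup>2" by simp
      then show ?thesis by (simp add: power2_eq_square algebra_simps)
    qed
    finally show ?thesis .
  qed
  have iG: "integrable M G" and EG: "(\<integral>\<omega>. G \<omega> \<partial>M) \<le> 6"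
  proof -
    have a: "integrable M (\<lambda>\<omega>. exp (s0 * (Zv \<omega>)\<^sup>2)) \<and> (\<integral>\<omega>. exp (s0 * (Zv \<omega>)\<^sup>2) \<partial>M) \<le> 3"
      unfolding Zv_def by (rule Zsq[OF J v]) (use s0_pos in auto)
    have b: "integrable M (\<lambda>\<omega>. exp (s0 * (Zw \<omega>)\<^sup>2)) \<and> (\<integral>\<omega>. exp (s0 * (Zw \<omega>)\<^sup>2) \<partial>M) \<le> 3"
      unfolding Zw_def by (rule Zsq[OF J w]) (use s0_pos in auto)
    show "integrable M G" unfolding G_def using a b by simp
    show "(\<integral>\<omega>. G \<omega> \<partial>M) \<le> 6" unfolding G_def using a b by simp
  qed
  have G0: "0 \<le> G \<omega>" for \<omega> by (simp add: G_def add_nonneg_nonneg)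
  have e2: "exp (2 * eps * \<bar>W \<omega>\<bar>) \<le> exp s0 / 2 * G \<omega>" for \<omega>
  proof -
    have "exp (2 * eps * \<bar>W \<omega>\<bar>) \<le> exp (2 * eps * ((Zv \<omega>)\<^sup>2 + (Zw \<omega>)\<^sup>2 + 2))"
      using Wb[of \<omega>] eps_pos by simp
    also have "\<dots> = exp s0 * (exp (s0/2 * (Zv \<omega>)\<^sup>2) * exp (s0/2 * (Zw \<omega>)\<^sup>2))"
      by (simp add: epsg_def exp_add[symmetric] algebra_simps)
    also have "exp (s0/2 * (Zv \<omega>)\<^sup>2) * exp (s0/2 * (Zw \<omega>)\<^sup>2) \<le> G \<omega> / 2"
    proof -
      let ?a = "exp (s0/2 * (Zv \<omega>)\<^sup>2)" and ?b = "exp (s0/2 * (Zw \<omega>)\<^sup>2)"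
      have "?a * ?a = exp (s0 * (Zv \<omega>)\<^sup>2)" by (simp add: exp_add[symmetric])
      moreover have "?b * ?b = exp (s0 * (Zw \<omega>)\<^sup>2)" by (simp add: exp_add[symmetric])
      moreover have "0 \<le> (?a - ?b)\<^sup>2" by simp
      ultimately show ?thesis by (simp add: G_def power2_eq_square algebra_simps)
    qed
    finally show ?thesis by (simp add: mult_left_mono)
  qed
  have e1: "exp (eps * \<bar>W \<omega>\<bar>) \<le> exp s0 / 2 * G \<omega>" for \<omega>
    using e2[of \<omega>] eps_pos by (smt (verit) exp_le_cancel_iff mult_right_mono abs_ge_zero mult_nonneg_nonneg)
  have H: "(W \<omega>)\<^sup>2 * exp (\<bar>l\<bar> * \<bar>W \<omega>\<bar>) \<le> exp s0 / eps\<^sup>2 * G \<omega>" for \<omega>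
  proof -
    have "(eps * \<bar>W \<omega>\<bar>) ^ 2 / fact 2 \<le> exp (eps * \<bar>W \<omega>\<bar>)"
      using eps_pos by (intro pow_fact_le_exp) simp
    then have a: "(W \<omega>)\<^sup>2 \<le> 2 / eps\<^sup>2 * exp (eps * \<bar>W \<omega>\<bar>)"
      using eps_pos by (simp add: power_mult_distrib field_simps)
    have b: "exp (\<bar>l\<bar> * \<bar>W \<omega>\<bar>) \<le> exp (eps * \<bar>W \<omega>\<bar>)"
      using l by (simp add: mult_right_mono)
    have "(W \<omega>)\<^sup>2 * exp (\<bar>l\<bar> * \<bar>W \<omega>\<bar>) \<le> (2 / eps\<^sup>2 * exp (eps * \<bar>W \<omega>\<bar>)) * exp (eps * \<bar>W \<omega>\<bar>)"
      using a b by (intro mult_mono) auto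
    also have "\<dots> = 2 / eps\<^sup>2 * exp (2 * eps * \<bar>W \<omega>\<bar>)" by (simp add: exp_add[symmetric])
    also have "\<dots> \<le> 2 / eps\<^sup>2 * (exp s0 / 2 * G \<omega>)" by (intro mult_left_mono e2) auto
    finally show ?thesis by simp
  qed
  have iGs: "integrable M (\<lambda>\<omega>. exp s0 / 2 * G \<omega>)" "integrable M (\<lambda>\<omega>. exp s0 / eps\<^sup>2 * G \<omega>)" using iG by auto
  have iE: "integrable M (\<lambda>\<omega>. exp (l * W \<omega>))"
  proof (rule Bochner_Integration.integrable_bound[OF iGs(1)])
    show "AE \<omega> in M. norm (exp (l * W \<omega>)) \<le> norm (exp s0 / 2 * G \<omega>)"
    proof (intro AE_I2)
      fix \<omega>
      have "exp (l * W \<omega>) \<le> exp (eps * \<bar>W \<omega>\<bar>)"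
        using l abs_ge_self[of "l * W \<omega>"] by (simp add: abs_mult mult_right_mono order_trans)
      then have "exp (l * W \<omega>) \<le> exp s0 / 2 * G \<omega>" using e1[of \<omega>] by (rule order_trans)
      then show "norm (exp (l * W \<omega>)) \<le> norm (exp s0 / 2 * G \<omega>)" using G0[of \<omega>] by simp
    qed
  qed simp
  have iH: "integrable M (\<lambda>\<omega>. (W \<omega>)\<^sup>2 * exp (\<bar>l\<bar> * \<bar>W \<omega>\<bar>))"
    by (rule Bochner_Integration.integrable_bound[OF iGs(2)]) (use H G0 in \<open>auto intro!: AE_I2\<close>)
  have ZZ': "integrable M (\<lambda>\<omega>. Zv \<omega> * Zw \<omega>) \<and> (\<integral>\<omega>. Zv \<omega> * Zw \<omega> \<partial>M) = c"
    unfolding Zv_def Zw_def c_def by (rule ZZ[OF J])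
  have iW: "integrable M W" unfolding W_def using ZZ' by simp
  have EW: "(\<integral>\<omega>. W \<omega> \<partial>M) = 0" unfolding W_def using ZZ' by (simp add: PM.prob_space)
  have "(\<integral>\<omega>. exp (l * W \<omega>) \<partial>M) \<le> (\<integral>\<omega>. 1 + l * W \<omega> + l\<^sup>2 / 2 * ((W \<omega>)\<^sup>2 * exp (\<bar>l\<bar> * \<bar>W \<omega>\<bar>)) \<partial>M)"
  proof (rule integral_mono[OF iE])
    show "integrable M (\<lambda>\<omega>. 1 + l * W \<omega> + l\<^sup>2 / 2 * ((W \<omega>)\<^sup>2 * exp (\<bar>l\<bar> * \<bar>W \<omega>\<bar>)))"
      using iW iH by (intro Bochner_Integration.integrable_add integrable_mult_right) auto
    show "exp (l * W \<omega>) \<le> 1 + l * W \<omega> + l\<^sup>2 / 2 * ((W \<omega>)\<^sup>2 * exp (\<bar>l\<bar> * \<bar>W \<omega>\<bar>))" for \<omega>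
      using exp_taylor2[of "l * W \<omega>"] by (simp add: power_mult_distrib abs_mult mult_ac)
  qed
  also have "\<dots> = 1 + l * (\<integral>\<omega>. W \<omega> \<partial>M) + l\<^sup>2 / 2 * (\<integral>\<omega>. (W \<omega>)\<^sup>2 * exp (\<bar>l\<bar> * \<bar>W \<omega>\<bar>) \<partial>M)"
    using iW iH by (simp add: PM.prob_space)
  also have "\<dots> \<le> 1 + K2 * l\<^sup>2"
  proof -
    have "(\<integral>\<omega>. (W \<omega>)\<^sup>2 * exp (\<bar>l\<bar> * \<bar>W \<omega>\<bar>) \<partial>M) \<le> (\<integral>\<omega>. exp s0 / eps\<^sup>2 * G \<omega> \<partial>M)"
      by (rule integral_mono[OF iH iGs(2) H])
    also have "\<dots> = exp s0 / eps\<^sup>2 * (\<integral>\<omega>. G \<omega> \<partial>M)" by simp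
    also have "\<dots> \<le> exp s0 / eps\<^sup>2 * 6" using EG by (intro mult_left_mono) auto
    finally have "l\<^sup>2 / 2 * (\<integral>\<omega>. (W \<omega>)\<^sup>2 * exp (\<bar>l\<bar> * \<bar>W \<omega>\<bar>) \<partial>M) \<le> l\<^sup>2 / 2 * (exp s0 / eps\<^sup>2 * 6)"
      by (intro mult_left_mono) auto
    then show ?thesis using EW by (simp add: K2g_def mult_ac)
  qed
  also have "\<dots> \<le> exp (K2 * l\<^sup>2)" by (rule exp_ge_add_one_self)
  finally show ?thesis using iE unfolding W_def Zv_def Zw_def c_def by simp
qed

lemma coord_indep:
  assumes I: "I \<noteq> {}"
  shows "prob_space.indep_vars M (\<lambda>_. D) (\<lambda>i \<omega>. \<omega> i) I"
  by (rule coord_indep_gen[OF PS I])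

lemma block_indep:
  fixes F :: "'l \<Rightarrow> ('i \<Rightarrow> real) \<Rightarrow> real"
  assumes I: "I \<noteq> {}" and L: "finite L" and K: "\<And>k. k \<in> L \<Longrightarrow> K k \<subseteq> I" and dj: "disjoint_family_on K L"
    and Fm: "\<And>k. k \<in> L \<Longrightarrow> F k \<in> borel_measurable (PiM (K k) (\<lambda>_. D))"
    and Fi: "\<And>k. k \<in> L \<Longrightarrow> integrable M (\<lambda>\<omega>. F k (restrict \<omega> (K k)))"
  shows "(\<integral>\<omega>. (\<Prod>k\<in>L. F k (restrict \<omega> (K k))) \<partial>M) = (\<Prod>k\<in>L. \<integral>\<omega>. F k (restrict \<omega> (K k)) \<partial>M)"
proof -
  interpret PM: prob_space M by (rule PSM)
  have "PM.indep_vars (\<lambda>k. PiM (K k) (\<lambda>_. D)) (\<lambda>k \<omega>. restrict (\<lambda>i. \<omega> i) (K k)) L"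
    by (rule PM.indep_vars_restrict[OF coord_indep[OF I] K dj])
  then have "PM.indep_vars (\<lambda>_. borel) (\<lambda>k \<omega>. F k (restrict (\<lambda>i. \<omega> i) (K k))) L"
    by (rule PM.indep_vars_compose2) (rule Fm)
  then show ?thesis
    using PM.indep_vars_lebesgue_integral[OF L, of "\<lambda>k \<omega>. F k (restrict \<omega> (K k))"] Fi by simp
qed

lemma chernoff:
  assumes Sm: "S \<in> borel_measurable M" and l: "l > 0"
    and iE: "integrable M (\<lambda>\<omega>. exp (l * S \<omega>))"
  shows "measure M {\<omega> \<in> space M. t \<le> S \<omega>} \<le> (\<integral>\<omega>. exp (l * S \<omega>) \<partial>M) / exp (l * t)"
proof -
  have "{\<omega> \<in> space M. t \<le> S \<omega>} = {\<omega> \<in> space M. exp (l * t) \<le> exp (l * S \<omega>)}"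
    using l by auto
  also have "measure M \<dots> \<le> (\<integral>\<omega>. exp (l * S \<omega>) \<partial>M) / exp (l * t)"
    by (rule integral_Markov_inequality_measure[OF iE, where A = "space M"]) auto
  finally show ?thesis .
qed

end

locale setting = subg +
  fixes m p n :: nat
begin
sublocale SP: subg_prod D \<alpha> "{..<m} \<times> {..<p} \<times> {..<n}" by unfold_locales simp
abbreviation "M \<equiv> PiM ({..<m} \<times> {..<p} \<times> {..<n}) (\<lambda>_. D)"
lemma PSM: "prob_space M" by (rule SP.PSM)
lemma comp_meas: "q \<in> {..<m} \<times> {..<p} \<times> {..<n} \<Longrightarrow> (\<lambda>\<omega>. \<omega> q) \<in> borel_measurable M"
  using measurable_component_singleton[of q "{..<m} \<times> {..<p} \<times> {..<n}" "\<lambda>_. D"] measurable_cong_sets[OF refl SB] by blast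
end

context setting begin

definition blk :: "nat \<times> nat \<Rightarrow> (nat \<times> nat \<times> nat) set" where
  "blk k = (\<lambda>j. (fst k, snd k, j)) ` {..<n}"

lemma blk_mem[simp]: "(a, b, j) \<in> blk k \<longleftrightarrow> a = fst k \<and> b = snd k \<and> j < n"
  by (auto simp: blk_def)

lemma blk_reindex: "(\<Sum>q\<in>blk k. f q) = (\<Sum>j<n. f (fst k, snd k, j))"
  unfolding blk_def by (subst sum.reindex) (auto simp: inj_on_def)

definition Sfun :: "(nat \<Rightarrow> real) \<Rightarrow> (nat \<Rightarrow> real) \<Rightarrow> (nat \<Rightarrow> real) \<Rightarrow> (nat \<times> nat \<times> nat \<Rightarrow> real) \<Rightarrow> real" where
  "Sfun g u x \<omega> = (\<Sum>k\<in>{..<m} \<times> {..<p}. g (fst k) * ((\<Sum>j<n. u j * \<omega> (fst k, snd k, j)) * (\<Sum>j<n. x j * \<omega> (fst k, snd k, j)) - (\<Sum>j<n. u j * x j)))"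

lemma Sfun_meas: "Sfun g u x \<in> borel_measurable SP.M"
proof -
  have c: "(\<lambda>\<omega>. \<omega> q) \<in> borel_measurable SP.M" if "q \<in> {..<m} \<times> {..<p} \<times> {..<n}" for q
    using that measurable_component_singleton[of q "{..<m} \<times> {..<p} \<times> {..<n}" "\<lambda>_. D"] measurable_cong_sets[OF refl SB] by blast
  show ?thesis unfolding Sfun_def
    by (intro borel_measurable_sum borel_measurable_times borel_measurable_diff borel_measurable_const c) auto
qed

lemma tail_u:
  assumes npos: "0 < n" "0 < m" "0 < p"
    and u: "(\<Sum>j<n. (u j)\<^sup>2) \<le> 1" and x: "(\<Sum>j<n. (x j)\<^sup>2) \<le> 1" and g: "\<And>i. i < m \<Longrightarrow> \<bar>g i\<bar> \<le> 2"
    and l: "0 < l" "l \<le> eps"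
  shows "measure SP.M {\<omega> \<in> space SP.M. t \<le> Sfun g u x \<omega>} \<le> exp (- l * t + real m * real p * K2 * l\<^sup>2)"
proof -
  let ?I = "{..<m} \<times> {..<p} \<times> {..<n}"
  let ?L = "{..<m} \<times> {..<p}"
  define c where "c = (\<Sum>j<n. u j * x j)"
  define F where "F k r = exp (l * (g (fst k) * ((\<Sum>j<n. u j * r (fst k, snd k, j)) * (\<Sum>j<n. x j * r (fst k, snd k, j)) - c)))"
    for k :: "nat \<times> nat" and r :: "nat \<times> nat \<times> nat \<Rightarrow> real"
  have Kb: "blk k \<subseteq> ?I" if "k \<in> ?L" for k using that by (auto simp: blk_def)
  have dj: "disjoint_family_on blk ?L" by (auto simp: disjoint_family_on_def blk_def)
  have rs: "restrict \<omega> (blk k) (fst k, snd k, j) = \<omega> (fst k, snd k, j)" if "j < n" for \<omega> k j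
    using that by (auto simp: blk_def)
  have Fr: "F k (restrict \<omega> (blk k)) = exp (l * (g (fst k) * ((\<Sum>j<n. u j * \<omega> (fst k, snd k, j)) * (\<Sum>j<n. x j * \<omega> (fst k, snd k, j)) - c)))" for \<omega> k
  proof -
    have s1: "(\<Sum>j<n. u j * restrict \<omega> (blk k) (fst k, snd k, j)) = (\<Sum>j<n. u j * \<omega> (fst k, snd k, j))"
      by (rule sum.cong) (auto simp: restrict_def)
    have s2: "(\<Sum>j<n. x j * restrict \<omega> (blk k) (fst k, snd k, j)) = (\<Sum>j<n. x j * \<omega> (fst k, snd k, j))"
      by (rule sum.cong) (auto simp: restrict_def)
    show ?thesis unfolding F_def s1 s2 ..
  qed
  have Fm: "F k \<in> borel_measurable (PiM (blk k) (\<lambda>_. D))" for k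
  proof -
    have c: "(\<lambda>r. r (fst k, snd k, j)) \<in> borel_measurable (PiM (blk k) (\<lambda>_. D))" if "j < n" for j
    proof -
      have "(fst k, snd k, j) \<in> blk k" using that by simp
      then show ?thesis
        using measurable_component_singleton[of "(fst k, snd k, j)" "blk k" "\<lambda>_. D"] measurable_cong_sets[OF refl SB] by blast
    qed
    have m1[measurable]: "(\<lambda>r. \<Sum>j<n. u j * r (fst k, snd k, j)) \<in> borel_measurable (PiM (blk k) (\<lambda>_. D))"
      by (intro borel_measurable_sum borel_measurable_times borel_measurable_const c) auto
    have m2[measurable]: "(\<lambda>r. \<Sum>j<n. x j * r (fst k, snd k, j)) \<in> borel_measurable (PiM (blk k) (\<lambda>_. D))"
      by (intro borel_measurable_sum borel_measurable_times borel_measurable_const c) auto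
    show ?thesis unfolding F_def by measurable
  qed
  have WM: "integrable SP.M (\<lambda>\<omega>. F k (restrict \<omega> (blk k))) \<and> (\<integral>\<omega>. F k (restrict \<omega> (blk k)) \<partial>SP.M) \<le> exp (K2 * l\<^sup>2)"
    if k: "k \<in> ?L" for k
  proof -
    define v where "v q = u (snd (snd q))" for q :: "nat \<times> nat \<times> nat"
    define w where "w q = x (snd (snd q))" for q :: "nat \<times> nat \<times> nat"
    have e1: "(\<Sum>q\<in>blk k. (v q)\<^sup>2) = (\<Sum>j<n. (u j)\<^sup>2)" by (simp add: blk_reindex v_def)
    have e2: "(\<Sum>q\<in>blk k. (w q)\<^sup>2) = (\<Sum>j<n. (x j)\<^sup>2)" by (simp add: blk_reindex w_def)
    have e3: "(\<Sum>q\<in>blk k. v q * \<omega> q) = (\<Sum>j<n. u j * \<omega> (fst k, snd k, j))" for \<omega> by (simp add: blk_reindex v_def)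
    have e4: "(\<Sum>q\<in>blk k. w q * \<omega> q) = (\<Sum>j<n. x j * \<omega> (fst k, snd k, j))" for \<omega> by (simp add: blk_reindex w_def)
    have e5: "(\<Sum>q\<in>blk k. v q * w q) = c" by (simp add: blk_reindex v_def w_def c_def)
    have gk: "\<bar>g (fst k)\<bar> \<le> 2" using g k by auto
    have "\<bar>l\<bar> \<le> eps" using l by simp
    from SP.Wmgf[OF Kb[OF k], of v w "g (fst k)" l, unfolded e5 e1 e2 e3 e4, OF u x gk this]
    show ?thesis by (simp add: Fr)
  qed
  have prodeq: "exp (l * Sfun g u x \<omega>) = (\<Prod>k\<in>?L. F k (restrict \<omega> (blk k)))" for \<omega>
    unfolding Sfun_def Fr c_def by (simp add: sum_distrib_left exp_sum)
  have iE: "integrable SP.M (\<lambda>\<omega>. exp (l * Sfun g u x \<omega>))"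
  proof -
    interpret PM: prob_space SP.M by (rule SP.PSM)
    have "integrable SP.M (\<lambda>\<omega>. \<Prod>k\<in>?L. F k (restrict \<omega> (blk k)))"
    proof -
      have "PM.indep_vars (\<lambda>k. PiM (blk k) (\<lambda>_. D)) (\<lambda>k \<omega>. restrict (\<lambda>i. \<omega> i) (blk k)) ?L"
        by (rule PM.indep_vars_restrict[OF SP.coord_indep Kb dj]) (use npos in auto)
      then have "PM.indep_vars (\<lambda>_. borel) (\<lambda>k \<omega>. F k (restrict (\<lambda>i. \<omega> i) (blk k))) ?L"
        by (rule PM.indep_vars_compose2) (rule Fm)
      then show ?thesis
        using PM.indep_vars_integrable[of ?L "\<lambda>k \<omega>. F k (restrict \<omega> (blk k))"] WM by simp
    qed
    then show ?thesis by (simp add: prodeq)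
  qed
  have "(\<integral>\<omega>. exp (l * Sfun g u x \<omega>) \<partial>SP.M) = (\<Prod>k\<in>?L. \<integral>\<omega>. F k (restrict \<omega> (blk k)) \<partial>SP.M)"
    unfolding prodeq by (rule SP.block_indep[OF _ _ Kb dj Fm]) (use npos WM in auto)
  also have "\<dots> \<le> (\<Prod>k\<in>?L. exp (K2 * l\<^sup>2))"
  proof (intro prod_mono conjI)
    fix k assume k: "k \<in> ?L"
    show "0 \<le> (\<integral>\<omega>. F k (restrict \<omega> (blk k)) \<partial>SP.M)" by (rule integral_nonneg_AE) (simp add: F_def)
    show "(\<integral>\<omega>. F k (restrict \<omega> (blk k)) \<partial>SP.M) \<le> exp (K2 * l\<^sup>2)" using WM[OF k] by simp
  qed
  also have "\<dots> = exp (real m * real p * K2 * l\<^sup>2)"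
    by (simp add: exp_of_nat_mult[symmetric] card_cartesian_product mult_ac)
  finally have E: "(\<integral>\<omega>. exp (l * Sfun g u x \<omega>) \<partial>SP.M) \<le> exp (real m * real p * K2 * l\<^sup>2)" .
  have "measure SP.M {\<omega> \<in> space SP.M. t \<le> Sfun g u x \<omega>} \<le> (\<integral>\<omega>. exp (l * Sfun g u x \<omega>) \<partial>SP.M) / exp (l * t)"
    by (rule SP.chernoff[OF Sfun_meas l(1) iE])
  also have "\<dots> \<le> exp (real m * real p * K2 * l\<^sup>2) / exp (l * t)"
    by (intro divide_right_mono E) simp
  also have "\<dots> = exp (- l * t + real m * real p * K2 * l\<^sup>2)"
    by (simp add: exp_diff[symmetric] exp_add)
  finally show ?thesis .
qed

end

context setting begin

definition Vv :: "(nat \<Rightarrow> real) \<Rightarrow> (nat \<Rightarrow> real) \<Rightarrow> (nat \<times> nat \<times> nat \<Rightarrow> real) \<Rightarrow> nat \<Rightarrow> real" where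
  "Vv g x \<omega> j = (\<Sum>k\<in>{..<m} \<times> {..<p}. g (fst k) * (\<omega> (fst k, snd k, j) * (\<Sum>i<n. x i * \<omega> (fst k, snd k, i)) - x j))"

lemma Sfun_V: "Sfun g u x \<omega> = (\<Sum>j<n. u j * Vv g x \<omega> j)"
proof -
  have "Sfun g u x \<omega> = (\<Sum>k\<in>{..<m} \<times> {..<p}. \<Sum>j<n. u j * (g (fst k) * (\<omega> (fst k, snd k, j) * (\<Sum>i<n. x i * \<omega> (fst k, snd k, i)) - x j)))"
    unfolding Sfun_def
  proof (rule sum.cong[OF refl])
    fix k :: "nat \<times> nat"
    let ?Z = "\<Sum>i<n. x i * \<omega> (fst k, snd k, i)"
    have "g (fst k) * ((\<Sum>j<n. u j * \<omega> (fst k, snd k, j)) * ?Z - (\<Sum>j<n. u j * x j))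
        = g (fst k) * (\<Sum>j<n. u j * (\<omega> (fst k, snd k, j) * ?Z - x j))"
      by (simp add: sum_distrib_right sum_subtractf right_diff_distrib mult_ac)
    also have "\<dots> = (\<Sum>j<n. u j * (g (fst k) * (\<omega> (fst k, snd k, j) * ?Z - x j)))"
      by (simp add: sum_distrib_left mult_ac)
    finally show "g (fst k) * ((\<Sum>j<n. u j * \<omega> (fst k, snd k, j)) * (\<Sum>j<n. x j * \<omega> (fst k, snd k, j)) - (\<Sum>j<n. u j * x j))
        = (\<Sum>j<n. u j * (g (fst k) * (\<omega> (fst k, snd k, j) * ?Z - x j)))" by (simp add: mult_ac)
  qed
  also have "\<dots> = (\<Sum>j<n. \<Sum>k\<in>{..<m} \<times> {..<p}. u j * (g (fst k) * (\<omega> (fst k, snd k, j) * (\<Sum>i<n. x i * \<omega> (fst k, snd k, i)) - x j)))"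
    by (rule sum.swap)
  also have "\<dots> = (\<Sum>j<n. u j * Vv g x \<omega> j)"
    unfolding Vv_def by (simp add: sum_distrib_left)
  finally show ?thesis .
qed

lemma sum_prod_split: "(\<Sum>k\<in>{..<m} \<times> {..<p}. f (fst k) (snd k)) = (\<Sum>i<m. \<Sum>l<p. f i l)"
  by (simp add: sum.cartesian_product split_def)

lemma xi0_V:
  assumes gs: "(\<Sum>i<m. g i) = real m" and nx: "nx \<noteq> 0" and N: "0 < real m * real p"
  shows "xi0 m p n \<omega> g x j - x j = nx / (real m * real p) * Vv g (\<lambda>i. x i / nx) \<omega> j"
proof -
  let ?Z = "\<lambda>i l. \<Sum>k<n. x k / nx * \<omega> (i, l, k)"
  have A: "xi0 m p n \<omega> g x j = nx / (real m * real p) * (\<Sum>i<m. \<Sum>l<p. g i * \<omega> (i, l, j) * ?Z i l)"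
  proof -
    have "(\<Sum>k<n. \<omega> (i, l, k) * x k) = nx * ?Z i l" for i l
      using nx by (simp add: sum_distrib_left field_simps)
    then have "xi0 m p n \<omega> g x j = 1 / (real m * real p) * (\<Sum>l<p. \<Sum>i<m. \<omega> (i, l, j) * (g i * (nx * ?Z i l)))"
      by (simp add: xi0_def meas_y_def Amul_def)
    also have "(\<Sum>l<p. \<Sum>i<m. \<omega> (i, l, j) * (g i * (nx * ?Z i l))) = nx * (\<Sum>i<m. \<Sum>l<p. g i * \<omega> (i, l, j) * ?Z i l)"
      using nx by (subst sum.swap) (simp add: sum_distrib_left mult_ac)
    finally show ?thesis by simp
  qed
  have B: "Vv g (\<lambda>i. x i / nx) \<omega> j = (\<Sum>i<m. \<Sum>l<p. g i * \<omega> (i, l, j) * ?Z i l) - x j / nx * (real m * real p)"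
  proof -
    have "Vv g (\<lambda>i. x i / nx) \<omega> j = (\<Sum>i<m. \<Sum>l<p. g i * (\<omega> (i, l, j) * ?Z i l - x j / nx))"
      unfolding Vv_def by (rule sum_prod_split[of "\<lambda>i l. g i * (\<omega> (i, l, j) * ?Z i l - x j / nx)"])
    also have "\<dots> = (\<Sum>i<m. \<Sum>l<p. g i * \<omega> (i, l, j) * ?Z i l) - (\<Sum>i<m. \<Sum>l<p. g i * (x j / nx))"
      by (simp add: right_diff_distrib sum_subtractf mult_ac)
    also have "(\<Sum>i<m. \<Sum>l<p. g i * (x j / nx)) = x j / nx * (real m * real p)"
    proof -
      have "(\<Sum>i<m. \<Sum>l<p. g i * (x j / nx)) = (\<Sum>i<m. g i * (x j / nx * real p))"
        by (intro sum.cong refl) (simp add: mult_ac)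
      also have "\<dots> = (\<Sum>i<m. g i) * (x j / nx * real p)" by (rule sum_distrib_right[symmetric])
      finally show ?thesis using gs by simp
    qed
    finally show ?thesis .
  qed
  have key: "\<And>a S b N. (N::real) \<noteq> 0 \<Longrightarrow> a = nx / N * S \<Longrightarrow> a - b = nx / N * (S - b / nx * N)"
    using nx by (simp add: field_simps)
  show ?thesis unfolding B by (rule key[OF _ A]) (use N in \<open>simp add: zero_less_mult_iff\<close>)
qed

end


context setting begin

lemma main_bound:
  assumes n2: "2 \<le> n" and mpos: "0 < m" "0 < p" and g: "\<And>i. i < m \<Longrightarrow> \<bar>g i\<bar> \<le> 2"
    and gs: "(\<Sum>i<m. g i) = real m" and nx: "0 < enorm n x"
    and d: "0 < \<delta>" "\<delta> < 1" and e1: "0 < e1" "e1 \<le> epsg \<alpha>" "K2g \<alpha> * e1 \<le> 1/4"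
    and big: "4 * real n * ln (real n) \<le> e1 * \<delta>\<^sup>2 * (real m * real p) / 8"
  shows "1 - exp (- (e1/8) * \<delta>\<^sup>2 * (real m * real p)) \<le>
    measure M {\<omega> \<in> space M. enorm n (\<lambda>j. xi0 m p n \<omega> g x j - x j) \<le> \<delta> * enorm n x}"
proof -
  interpret PM: prob_space M by (rule PSM)
  define N where "N = real m * real p"
  define nx where "nx = enorm n x"
  define xh where "xh i = x i / nx" for i
  define t where "t = \<delta> * N / 2"
  define l where "l = e1 * \<delta>"
  have Np: "0 < N" using mpos by (simp add: N_def)
  have nxp: "0 < nx" using nx by (simp add: nx_def)
  have sx: "(\<Sum>j<n. (x j)\<^sup>2) = nx\<^sup>2" unfolding nx_def enorm_def by (simp add: sum_nonneg)
  have xh1: "(\<Sum>j<n. (xh j)\<^sup>2) = 1"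
    using sx nxp by (simp add: xh_def power_divide sum_divide_distrib[symmetric])
  have lp: "0 < l" using e1 d by (simp add: l_def)
  have "e1 * \<delta> \<le> e1 * 1" using e1 d by (intro mult_left_mono) auto
  then have le: "l \<le> epsg \<alpha>" using e1(2) unfolding l_def by linarith
  define B where "B u = {\<omega> \<in> space M. t \<le> Sfun g u xh \<omega>}" for u
  define Bad where "Bad = (\<Union>u\<in>netN n. B u)"
  have finN: "finite (netN n)" using netN_finite_card by blast
  have Bs: "B u \<in> sets M" for u unfolding B_def using Sfun_meas[of g u xh] by measurable
  have Bads: "Bad \<in> sets M" unfolding Bad_def using finN Bs by (intro sets.finite_UN) auto
  have tailB: "measure M (B u) \<le> exp (- (e1/4) * \<delta>\<^sup>2 * N)" if u: "u \<in> netN n" for u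
  proof -
    have u1: "(\<Sum>j<n. (u j)\<^sup>2) \<le> 1" using u by (simp add: netN_def)
    have "measure M (B u) \<le> exp (- l * t + real m * real p * K2g \<alpha> * l\<^sup>2)"
      unfolding B_def by (rule tail_u) (use n2 mpos u1 xh1 g lp le in auto)
    also have "\<dots> \<le> exp (- (e1/4) * \<delta>\<^sup>2 * N)"
    proof -
      have "K2g \<alpha> * e1 * (e1 * \<delta>\<^sup>2 * N) \<le> 1/4 * (e1 * \<delta>\<^sup>2 * N)"
        using e1 d Np by (intro mult_right_mono) auto
      then show ?thesis unfolding l_def t_def N_def
        by (simp add: power2_eq_square algebra_simps)
    qed
    finally show ?thesis .
  qed
  have mBad: "measure M Bad \<le> exp (- (e1/8) * \<delta>\<^sup>2 * N)"
  proof -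
    have "measure M Bad \<le> (\<Sum>u\<in>netN n. measure M (B u))"
      unfolding Bad_def using finN Bs by (intro PM.finite_measure_subadditive_finite) auto
    also have "\<dots> \<le> (\<Sum>u\<in>netN n. exp (- (e1/4) * \<delta>\<^sup>2 * N))" by (intro sum_mono tailB)
    also have "\<dots> = real (card (netN n)) * exp (- (e1/4) * \<delta>\<^sup>2 * N)" by simp
    also have "\<dots> \<le> exp (4 * real n * ln (real n)) * exp (- (e1/4) * \<delta>\<^sup>2 * N)"
    proof (rule mult_right_mono)
      have "real (card (netN n)) \<le> real ((4 * n + 1) ^ n)" using netN_finite_card by (simp only: of_nat_le_iff)
      also have "\<dots> = exp (real n * ln (real (4 * n + 1)))"
        by (subst exp_of_nat_mult) (simp del: of_nat_Suc of_nat_add)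
      also have "\<dots> \<le> exp (4 * real n * ln (real n))"
      proof -
        have "4 * n + 1 \<le> n ^ 4"
        proof -
          have "2 * 2 * 2 * n \<le> n * n * n * n" using n2 by (intro mult_mono) auto
          moreover have "4 * n + 1 \<le> 2 * 2 * 2 * n" using n2 by linarith
          ultimately have "4 * n + 1 \<le> n * n * n * n" by linarith
          then show ?thesis by (simp only: power4_eq_xxxx)
        qed
        then have "ln (real (4 * n + 1)) \<le> ln (real (n ^ 4))" using n2
          by (subst ln_le_cancel_iff) (auto simp del: of_nat_Suc of_nat_add)
        also have "\<dots> = 4 * ln (real n)" using n2 by (simp add: ln_realpow)
        finally show ?thesis by (simp add: mult_left_mono mult_ac)
      qed
      finally show "real (card (netN n)) \<le> exp (4 * real n * ln (real n))" .
    qed simp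
    also have "\<dots> \<le> exp (- (e1/8) * \<delta>\<^sup>2 * N)"
      using big unfolding N_def by (simp add: exp_add[symmetric])
    finally show ?thesis .
  qed
  have xm: "(\<lambda>\<omega>. xi0 m p n \<omega> g x j) \<in> borel_measurable M" if "j < n" for j
    unfolding xi0_def meas_y_def Amul_def
    by (intro borel_measurable_times borel_measurable_sum borel_measurable_const comp_meas) (use that in auto)
  have fm: "(\<lambda>\<omega>. enorm n (\<lambda>j. xi0 m p n \<omega> g x j - x j)) \<in> borel_measurable M"
  proof -
    have sm: "(\<lambda>\<omega>. \<Sum>j<n. (xi0 m p n \<omega> g x j - x j)\<^sup>2) \<in> borel_measurable M"
      by (intro borel_measurable_sum borel_measurable_power borel_measurable_diff borel_measurable_const xm) auto
    show ?thesis unfolding enorm_def using measurable_compose[OF sm borel_measurable_sqrt] by (simp add: comp_def)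
  qed
  have Gs: "{\<omega> \<in> space M. enorm n (\<lambda>j. xi0 m p n \<omega> g x j - x j) \<le> \<delta> * enorm n x} \<in> sets M"
    using fm by measurable
  have sub: "space M - Bad \<subseteq> {\<omega> \<in> space M. enorm n (\<lambda>j. xi0 m p n \<omega> g x j - x j) \<le> \<delta> * enorm n x}"
  proof
    fix \<omega> assume w: "\<omega> \<in> space M - Bad"
    then have ws: "\<omega> \<in> space M" and nb: "\<And>u. u \<in> netN n \<Longrightarrow> Sfun g u xh \<omega> < t"
      unfolding Bad_def B_def by auto
    define V where "V j = Vv g xh \<omega> j" for j
    define nV where "nV = sqrt (\<Sum>j<n. (V j)\<^sup>2)"
    have nV0: "0 \<le> nV" by (simp add: nV_def sum_nonneg)
    have nVle: "nV \<le> \<delta> * N"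
    proof (rule ccontr)
      assume "\<not> nV \<le> \<delta> * N"
      then have lt: "\<delta> * N < nV" by simp
      then have nVp: "0 < nV" using d Np by (smt (verit) mult_pos_pos)
      have sV: "(\<Sum>j<n. (V j)\<^sup>2) = nV\<^sup>2" by (simp add: nV_def sum_nonneg)
      have "(\<Sum>j<n. (V j / nV)\<^sup>2) = 1" using sV nVp by (simp add: power_divide sum_divide_distrib[symmetric])
      then obtain u where u: "u \<in> netN n" and uh: "1/2 \<le> (\<Sum>j<n. u j * (V j / nV))"
        using net_exists[of n "\<lambda>j. V j / nV"] n2 by auto
      have "Sfun g u xh \<omega> = (\<Sum>j<n. u j * V j)" by (simp add: Sfun_V V_def)
      also have "\<dots> = nV * (\<Sum>j<n. u j * (V j / nV))" using nVp by (simp add: sum_distrib_left)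
      also have "\<dots> \<ge> nV * (1/2)" using uh nVp by (intro mult_left_mono) auto
      finally have "nV / 2 \<le> Sfun g u xh \<omega>" by simp
      moreover have "t < nV / 2" using lt by (simp add: t_def)
      ultimately show False using nb[OF u] by simp
    qed
    have eqx: "xi0 m p n \<omega> g x j - x j = nx / N * V j" for j
      unfolding V_def xh_def N_def by (rule xi0_V[OF gs]) (use nxp Np N_def in auto)
    have "enorm n (\<lambda>j. xi0 m p n \<omega> g x j - x j) = sqrt (\<Sum>j<n. (nx / N)\<^sup>2 * (V j)\<^sup>2)"
      unfolding enorm_def eqx by (simp only: power_mult_distrib)
    also have "\<dots> = nx / N * nV"
      using nxp Np by (simp add: sum_distrib_left[symmetric] real_sqrt_mult nV_def)
    also have "\<dots> \<le> nx / N * (\<delta> * N)" using nVle nxp Np by (intro mult_left_mono) auto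
    also have "\<dots> = \<delta> * enorm n x" using Np by (simp add: nx_def)
    finally show "\<omega> \<in> {\<omega> \<in> space M. enorm n (\<lambda>j. xi0 m p n \<omega> g x j - x j) \<le> \<delta> * enorm n x}" using ws by simp
  qed
  have "1 - exp (- (e1/8) * \<delta>\<^sup>2 * N) \<le> 1 - measure M Bad" using mBad by simp
  also have "\<dots> = measure M (space M - Bad)" using Bads by (simp add: PM.prob_compl)
  also have "\<dots> \<le> measure M {\<omega> \<in> space M. enorm n (\<lambda>j. xi0 m p n \<omega> g x j - x j) \<le> \<delta> * enorm n x}"
    by (rule PM.finite_measure_mono[OF sub Gs])
  finally show ?thesis by (simp add: N_def)
qed

end

lemma main_inst:
  fixes \<alpha> e1 C' :: real
  assumes apos: "\<alpha> > 0" and e1p: "0 < e1" and e1a: "e1 \<le> epsg \<alpha>" and e1b: "K2g \<alpha> * e1 \<le> 1/4"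
    and C'4: "4 \<le> C'" and C'32: "32 / e1 \<le> C'"
  shows "\<forall>(D :: real measure) (n :: nat) (m :: nat) (p :: nat) (x :: nat \<Rightarrow> real)
        (\<rho> :: real) (g :: nat \<Rightarrow> real) (\<delta> :: real) (t :: real).
      prob_space D \<and> sets D = sets borel \<and>
      integrable D (\<lambda>u. u) \<and> (\<integral>u. u \<partial>D) = 0 \<and>
      integrable D (\<lambda>u. u\<^sup>2) \<and> (\<integral>u. u\<^sup>2 \<partial>D) = 1 \<and>
      subgauss_norm_eq D \<alpha> \<and>
      (\<exists>j<n. x j \<noteq> 0) \<and>
      ((\<integral>u. u ^ 4 \<partial>D) = 1 \<longrightarrow>
         n > 1 \<and> norm4_pow4 n (\<lambda>j. x j / enorm n x) \<le> 1 - c0 / real n) \<and>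
      0 \<le> \<rho> \<and> \<rho> < 1 \<and> g \<in> Gset m \<rho> \<and>
      0 < \<delta> \<and> \<delta> < 1 \<and> t \<ge> 1 \<and>
      real m * real p \<ge> C' * \<delta> powr (-2) * (real n + real m) * ln (real n / \<delta>) \<and>
      real n \<ge> C' * t * ln (real m * real p)
      \<longrightarrow>
      measure (sample_space m p n D)
        {\<omega> \<in> space (sample_space m p n D).
           enorm n (\<lambda>j. xi0 m p n \<omega> g x j - x j) \<le> \<delta> * enorm n x \<and>
           infnorm m (\<lambda>i. 1 - g i) \<le> \<rho> \<and>
           (xi0 m p n \<omega> g x, (\<lambda>_. 1)) \<in> Dset n m x g (sqrt (\<delta>\<^sup>2 + \<rho>\<^sup>2)) \<rho>}
      \<ge> 1 - 1 * exp (- (e1/8) * \<delta>\<^sup>2 * real m * real p) - (real m * real p) powr (- t)"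
  apply (intro allI impI)
  subgoal premises H for D n m p x \<rho> g \<delta> t
  proof -
      note PS = H[THEN conjunct1]
      note SB = H[THEN conjunct2, THEN conjunct1]
      note I1 = H[THEN conjunct2, THEN conjunct2, THEN conjunct1]
      note m0 = H[THEN conjunct2, THEN conjunct2, THEN conjunct2, THEN conjunct1]
      note I2 = H[THEN conjunct2, THEN conjunct2, THEN conjunct2, THEN conjunct2, THEN conjunct1]
      note m2 = H[THEN conjunct2, THEN conjunct2, THEN conjunct2, THEN conjunct2, THEN conjunct2, THEN conjunct1]
      note SG = H[THEN conjunct2, THEN conjunct2, THEN conjunct2, THEN conjunct2, THEN conjunct2, THEN conjunct2, THEN conjunct1]
      note hx = H[THEN conjunct2, THEN conjunct2, THEN conjunct2, THEN conjunct2, THEN conjunct2, THEN conjunct2, THEN conjunct2, THEN conjunct1]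
      note h4 = H[THEN conjunct2, THEN conjunct2, THEN conjunct2, THEN conjunct2, THEN conjunct2, THEN conjunct2, THEN conjunct2, THEN conjunct2, THEN conjunct1]
      note rho0 = H[THEN conjunct2, THEN conjunct2, THEN conjunct2, THEN conjunct2, THEN conjunct2, THEN conjunct2, THEN conjunct2, THEN conjunct2, THEN conjunct2, THEN conjunct1]
      note rho1 = H[THEN conjunct2, THEN conjunct2, THEN conjunct2, THEN conjunct2, THEN conjunct2, THEN conjunct2, THEN conjunct2, THEN conjunct2, THEN conjunct2, THEN conjunct2, THEN conjunct1]
      note gG = H[THEN conjunct2, THEN conjunct2, THEN conjunct2, THEN conjunct2, THEN conjunct2, THEN conjunct2, THEN conjunct2, THEN conjunct2, THEN conjunct2, THEN conjunct2, THEN conjunct2, THEN conjunct1]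
      note d0 = H[THEN conjunct2, THEN conjunct2, THEN conjunct2, THEN conjunct2, THEN conjunct2, THEN conjunct2, THEN conjunct2, THEN conjunct2, THEN conjunct2, THEN conjunct2, THEN conjunct2, THEN conjunct2, THEN conjunct1]
      note d1 = H[THEN conjunct2, THEN conjunct2, THEN conjunct2, THEN conjunct2, THEN conjunct2, THEN conjunct2, THEN conjunct2, THEN conjunct2, THEN conjunct2, THEN conjunct2, THEN conjunct2, THEN conjunct2, THEN conjunct2, THEN conjunct1]
      note t1 = H[THEN conjunct2, THEN conjunct2, THEN conjunct2, THEN conjunct2, THEN conjunct2, THEN conjunct2, THEN conjunct2, THEN conjunct2, THEN conjunct2, THEN conjunct2, THEN conjunct2, THEN conjunct2, THEN conjunct2, THEN conjunct2, THEN conjunct1]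
      note h16 = H[THEN conjunct2, THEN conjunct2, THEN conjunct2, THEN conjunct2, THEN conjunct2, THEN conjunct2, THEN conjunct2, THEN conjunct2, THEN conjunct2, THEN conjunct2, THEN conjunct2, THEN conjunct2, THEN conjunct2, THEN conjunct2, THEN conjunct2, THEN conjunct1]
      note h17 = H[THEN conjunct2, THEN conjunct2, THEN conjunct2, THEN conjunct2, THEN conjunct2, THEN conjunct2, THEN conjunct2, THEN conjunct2, THEN conjunct2, THEN conjunct2, THEN conjunct2, THEN conjunct2, THEN conjunct2, THEN conjunct2, THEN conjunct2, THEN conjunct2]
      have sg: "subg D \<alpha>" unfolding subg_def using PS SB apos I1 m0 I2 m2 SG by (intro conjI)
      interpret S: setting D \<alpha> m p n using sg by (simp add: setting_def)
      obtain j0 where j0: "j0 < n" "x j0 \<noteq> 0" using hx by blast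
      have n1: "1 \<le> n" using j0 by simp
      have nxp: "0 < enorm n x"
      proof -
        have "0 < (\<Sum>j<n. (x j)\<^sup>2)" using j0 by (intro sum_pos2[of _ j0]) auto
        then show ?thesis by (simp add: enorm_def)
      qed
      have lnp: "0 < ln (real n / \<delta>)"
      proof -
        have "1 < real n / \<delta>" using n1 d0 d1 by (simp add: field_simps)
        then show ?thesis by simp
      qed
      have dp2: "\<delta> powr (-2) = 1 / \<delta>\<^sup>2" using d0 by (simp add: powr_minus divide_inverse)
      have Nlow: "C' * (real n + real m) * ln (real n / \<delta>) \<le> (real m * real p) * \<delta>\<^sup>2"
      proof -
        have "C' * (real n + real m) * ln (real n / \<delta>) / \<delta>\<^sup>2 \<le> real m * real p"
          using h16 unfolding dp2 by (simp add: field_simps)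
        then show ?thesis using d0 by (simp add: divide_le_eq)
      qed
      have Cpos: "0 < C' * (real n + real m) * ln (real n / \<delta>)"
        using C'4 n1 lnp by (intro mult_pos_pos) auto
      have Npos: "0 < real m * real p"
      proof -
        have "0 < (real m * real p) * \<delta>\<^sup>2" using Cpos Nlow by linarith
        then show ?thesis using d0 by (simp add: zero_less_mult_iff)
      qed
      have mpos: "0 < m" "0 < p" using Npos by (auto simp: zero_less_mult_iff)
      have gsum: "(\<Sum>i<m. g i - 1) = 0" and gdev: "\<And>i. i < m \<Longrightarrow> \<bar>g i - 1\<bar> \<le> \<rho>"
        using gG by (auto simp: Gset_def)
      have gs: "(\<Sum>i<m. g i) = real m" using gsum by (simp add: sum_subtractf)
      have gb: "\<bar>g i\<bar> \<le> 2" if "i < m" for i using gdev[OF that] rho1 by linarith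
      have infn: "infnorm m (\<lambda>i. 1 - g i) \<le> \<rho>"
        unfolding infnorm_def using rho0 gdev by (subst Max_le_iff) (auto simp: abs_minus_commute)
      have g1: "(\<lambda>_. 1) \<in> Gset m \<rho>" using rho0 by (simp add: Gset_def)
      have eg: "(enorm m (\<lambda>i. 1 - g i))\<^sup>2 \<le> real m * \<rho>\<^sup>2"
      proof -
        have "(enorm m (\<lambda>i. 1 - g i))\<^sup>2 = (\<Sum>i<m. (1 - g i)\<^sup>2)" by (simp add: enorm_def sum_nonneg)
        also have "\<dots> \<le> (\<Sum>i<m. \<rho>\<^sup>2)"
        proof (rule sum_mono)
          fix i assume "i \<in> {..<m}"
          then have "\<bar>1 - g i\<bar> \<le> \<rho>" using gdev by (simp add: abs_minus_commute)
          then have "\<bar>1 - g i\<bar>\<^sup>2 \<le> \<rho>\<^sup>2" by (intro power_mono) auto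
          then show "(1 - g i)\<^sup>2 \<le> \<rho>\<^sup>2" by simp
        qed
        finally show ?thesis by simp
      qed
      have Dok: "(\<xi>, (\<lambda>_. 1)) \<in> Dset n m x g (sqrt (\<delta>\<^sup>2 + \<rho>\<^sup>2)) \<rho>"
        if E: "enorm n (\<lambda>j. \<xi> j - x j) \<le> \<delta> * enorm n x" for \<xi>
      proof -
        have E0: "0 \<le> enorm n (\<lambda>j. \<xi> j - x j)" by (simp add: enorm_def sum_nonneg)
        have "(enorm n (\<lambda>j. \<xi> j - x j))\<^sup>2 \<le> (\<delta> * enorm n x)\<^sup>2" using E E0 by (intro power_mono) auto
        moreover have "(enorm n x)\<^sup>2 / real m * (enorm m (\<lambda>i. 1 - g i))\<^sup>2 \<le> (enorm n x)\<^sup>2 / real m * (real m * \<rho>\<^sup>2)"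
          by (intro mult_left_mono eg) auto
        moreover have "(enorm n x)\<^sup>2 / real m * (real m * \<rho>\<^sup>2) = \<rho>\<^sup>2 * (enorm n x)\<^sup>2" using mpos by simp
        ultimately have "Delta n m x g \<xi> (\<lambda>_. 1) \<le> (\<delta>\<^sup>2 + \<rho>\<^sup>2) * (enorm n x)\<^sup>2"
          unfolding Delta_def by (simp add: power_mult_distrib algebra_simps)
        then show ?thesis using g1 by (simp add: Dset_def)
      qed
      have SSeq: "sample_space m p n D = S.M" by (simp add: sample_space_def)
      have setEq: "{\<omega> \<in> space (sample_space m p n D).
           enorm n (\<lambda>j. xi0 m p n \<omega> g x j - x j) \<le> \<delta> * enorm n x \<and>
           infnorm m (\<lambda>i. 1 - g i) \<le> \<rho> \<and>
           (xi0 m p n \<omega> g x, (\<lambda>_. 1)) \<in> Dset n m x g (sqrt (\<delta>\<^sup>2 + \<rho>\<^sup>2)) \<rho>}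
        = {\<omega> \<in> space S.M. enorm n (\<lambda>j. xi0 m p n \<omega> g x j - x j) \<le> \<delta> * enorm n x}"
        unfolding SSeq using infn Dok by blast
      have main: "1 - 1 * exp (- (e1/8) * \<delta>\<^sup>2 * real m * real p) - (real m * real p) powr (- t) \<le>
          measure S.M {\<omega> \<in> space S.M. enorm n (\<lambda>j. xi0 m p n \<omega> g x j - x j) \<le> \<delta> * enorm n x}"
      proof (cases "n = 1")
        case True
        have hh: "C' * t * ln (real m * real p) \<le> 1" using h17 True by simp
        have m1: "1 \<le> real m" "1 \<le> real p" using mpos by auto
        have N1: "1 \<le> real m * real p" using mult_mono[OF m1] by simp
        have Neq: "real m * real p = 1"
        proof (rule ccontr)
          assume ne: "real m * real p \<noteq> 1"
          have "m * p \<noteq> 1" using ne by (metis of_nat_1 of_nat_mult)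
          moreover have "1 \<le> m * p" using mpos by simp
          ultimately have "2 \<le> m * p" by linarith
          then have N2: "2 \<le> real m * real p" by (metis of_nat_le_iff of_nat_mult of_nat_numeral)
          have l2: "1/2 \<le> ln (2::real)"
          proof -
            have "ln (1/2::real) \<le> 1/2 - 1" by (rule ln_le_minus_one) simp
            moreover have "ln (1/2::real) = - ln 2" by (simp add: ln_div)
            ultimately show ?thesis by simp
          qed
          have "ln 2 \<le> ln (real m * real p)" using N2 by simp
          then have lN: "1/2 \<le> ln (real m * real p)" using l2 by linarith
          have "4 * 1 * (1/2) \<le> C' * t * ln (real m * real p)"
            using C'4 t1 lN by (intro mult_mono) auto
          then show False using hh by simp
        qed
        have "1 - 1 * exp (- (e1/8) * \<delta>\<^sup>2 * real m * real p) - (real m * real p) powr (- t) \<le> 0"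
          using Neq by simp
        also have "0 \<le> measure S.M {\<omega> \<in> space S.M. enorm n (\<lambda>j. xi0 m p n \<omega> g x j - x j) \<le> \<delta> * enorm n x}"
          by (rule measure_nonneg)
        finally show ?thesis .
      next
        case False
        then have n2: "2 \<le> n" using n1 by simp
        have lnn: "0 \<le> ln (real n)" using n1 by simp
        have lnd: "ln (real n) \<le> ln (real n / \<delta>)"
        proof -
          have "real n \<le> real n / \<delta>" using d0 d1 n1 by (simp add: field_simps)
          then show ?thesis using n1 by simp
        qed
        have "32 / e1 * real n * ln (real n) \<le> C' * (real n + real m) * ln (real n / \<delta>)"
          using C'32 C'4 lnd lnn e1p by (intro mult_mono) auto
        then have "32 / e1 * real n * ln (real n) \<le> (real m * real p) * \<delta>\<^sup>2" using Nlow by linarith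
        then have "e1 / 8 * (32 / e1 * real n * ln (real n)) \<le> e1 / 8 * ((real m * real p) * \<delta>\<^sup>2)"
          using e1p by (intro mult_left_mono) auto
        then have big: "4 * real n * ln (real n) \<le> e1 * \<delta>\<^sup>2 * (real m * real p) / 8"
          using e1p by (simp add: field_simps)
        have mb: "1 - exp (- (e1/8) * \<delta>\<^sup>2 * (real m * real p)) \<le>
          measure S.M {\<omega> \<in> space S.M. enorm n (\<lambda>j. xi0 m p n \<omega> g x j - x j) \<le> \<delta> * enorm n x}"
          by (rule S.main_bound[OF n2 mpos _ gs nxp d0 d1 e1p e1a e1b big]) (use gb in auto)
        have "1 - 1 * exp (- (e1/8) * \<delta>\<^sup>2 * real m * real p) - (real m * real p) powr (- t)
              \<le> 1 - exp (- (e1/8) * \<delta>\<^sup>2 * (real m * real p))"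
          by (simp add: mult_ac)
        then show ?thesis using mb by linarith
      qed
      show ?thesis unfolding setEq unfolding SSeq by (rule main)
  qed
  done

theorem mainTheorem4:
  fixes \<alpha> c0 :: real
  assumes "\<alpha> > 0" and "c0 > 0"
  shows "\<exists>C' C c :: real. C' > 0 \<and> C > 0 \<and> c > 0 \<and>
    (\<forall>(D :: real measure) (n :: nat) (m :: nat) (p :: nat) (x :: nat \<Rightarrow> real)
        (\<rho> :: real) (g :: nat \<Rightarrow> real) (\<delta> :: real) (t :: real).
      prob_space D \<and> sets D = sets borel \<and>
      integrable D (\<lambda>u. u) \<and> (\<integral>u. u \<partial>D) = 0 \<and>
      integrable D (\<lambda>u. u\<^sup>2) \<and> (\<integral>u. u\<^sup>2 \<partial>D) = 1 \<and>
      subgauss_norm_eq D \<alpha> \<and>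
      (\<exists>j<n. x j \<noteq> 0) \<and>
      ((\<integral>u. u ^ 4 \<partial>D) = 1 \<longrightarrow>
         n > 1 \<and> norm4_pow4 n (\<lambda>j. x j / enorm n x) \<le> 1 - c0 / real n) \<and>
      0 \<le> \<rho> \<and> \<rho> < 1 \<and> g \<in> Gset m \<rho> \<and>
      0 < \<delta> \<and> \<delta> < 1 \<and> t \<ge> 1 \<and>
      real m * real p \<ge> C' * \<delta> powr (-2) * (real n + real m) * ln (real n / \<delta>) \<and>
      real n \<ge> C' * t * ln (real m * real p)
      \<longrightarrow>
      measure (sample_space m p n D)
        {\<omega> \<in> space (sample_space m p n D).
           enorm n (\<lambda>j. xi0 m p n \<omega> g x j - x j) \<le> \<delta> * enorm n x \<and>
           infnorm m (\<lambda>i. 1 - g i) \<le> \<rho> \<and>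
           (xi0 m p n \<omega> g x, (\<lambda>_. 1)) \<in> Dset n m x g (sqrt (\<delta>\<^sup>2 + \<rho>\<^sup>2)) \<rho>}
      \<ge> 1 - C * exp (- c * \<delta>\<^sup>2 * real m * real p) - (real m * real p) powr (- t))"
proof -
  define e1 where "e1 = min (epsg \<alpha>) (1 / (4 * K2g \<alpha>))"
  have K2p: "0 < K2g \<alpha>" by (rule K2g_pos[OF assms(1)])
  have e1p: "0 < e1" using epsg_pos[OF assms(1)] K2p by (simp add: e1_def)
  have e1a: "e1 \<le> epsg \<alpha>" by (simp add: e1_def)
  have e1b: "K2g \<alpha> * e1 \<le> 1/4"
  proof -
    have "e1 \<le> 1 / (4 * K2g \<alpha>)" by (simp add: e1_def)
    then have "K2g \<alpha> * e1 \<le> K2g \<alpha> * (1 / (4 * K2g \<alpha>))" using K2p by (intro mult_left_mono) auto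
    then show ?thesis using K2p by simp
  qed
  define C' where "C' = 4 + 32 / e1"
  have C'4: "4 \<le> C'" using e1p by (simp add: C'_def)
  have C'32: "32 / e1 \<le> C'" by (simp add: C'_def)
  have "C' > 0" using C'4 by simp
  moreover have "e1 / 8 > 0" using e1p by simp
  moreover note main_inst[OF assms(1) e1p e1a e1b C'4 C'32]
  ultimately show ?thesis by (intro exI[of _ C'] exI[of _ 1] exI[of _ "e1/8"]) simp
qed

end
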